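(* Suppose $u_1$ is cyclically separable. Then for every $\varepsilon>0$ there exists $\kappa>0$ such that for every prior $\mu_0$ with $\mu_0(\omega_R)>1-\kappa$ and every $\delta<1$, \[\overline U_1(\delta)<\bar v_1^{\mathrm{CM}}+\varepsilon.\]
   Context: Stage game. Three players $0,1,2$ have finite action sets $A_0,A_1,A_2$; $Y_0,Y_1$ are finite signal sets. Player 0 takes $a_0$, generating a signal $y_0\sim\rho_0(\cdot\mid a_0)$ observed only by player 1; players 1 and 2 then simultaneously take $a_1,a_2$, generating a public signal $y_1\sim\rho_1(\cdot\mid a_1,a_2)$. Assume: (i) $\rho_0(y_0\mid a_0)>0$ always; (ii) $\rho_1(y_1\mid a_1,a_2)>0$ implies $\rho_1(y_1\mid a_1,a_2')>0$; (iii) for every $a_2$ the vectors $(\rho_1(\cdot\mid a_1,a_2))_{a_1\in A_1}$ are linearly independent. Stage strategies: $\alpha_0\in\Delta(A_0)$, $\alpha_2\in\Delta(A_2)$, $s_1:Y_0\to\Delta(A_1)$. Payoffs $u_0:A_0\times A_1\to\mathbb{R}$, $u_i:Y_0\times A_1\times A_2\to\mathbb{R}$ ($i=1,2$), extended by expectation; $u_1(\cdot,\alpha_2)$ is $(y_0,a_1)\mapsto\sum_{a_2}\alpha_2(a_2)u_1(y_0,a_1,a_2)$. $B(s_1)$: set of $(\alpha_0,\alpha_2)$ with $\mathrm{supp}(\alpha_0)\subset\arg\max_{a_0}u_0(a_0,s_1)$ and $\mathrm{supp}(\alpha_2)\subset\arg\max_{a_2}u_2(\alpha_0,s_1,a_2)$.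 Repeated game: periods $t=0,1,\dots$; player 1 long-lived with discount factor $\delta$ and payoff $(1-\delta)\sum_t\delta^tu_1$; new myopic players 0 and 2 each period observe only the public history of past $y_1$'s. Player 1's type is drawn from a full-support prior $\mu_0$ on a countable set $\Omega$ consisting of a rational type $\omega_R$ and commitment types $\omega_{s_1}$ that play $s_1$ every period. $\overline U_1(\delta)$: supremum over Nash equilibria of the rational type's payoff. For $u:Y_0\times A_1\to\mathbb{R}$, $S\subset Y_0\times A_1$ is $u$-cyclically monotone if for every finite $\{(x_i,y_i)\}_{i=1}^N\subset S$ (with $y_{N+1}=y_1$), $\sum_iu(x_i,y_i)\ge\sum_iu(x_i,y_{i+1})$. $u_1$ is cyclically separable if any $S$ that is $u_1(\cdot,\alpha_2)$-cyclically monotone for some $\alpha_2\in\Delta(A_2)$ is so for all $\alpha_2$. A strategy $s_1$ is $u_1$-cyclically monotone if $\mathrm{supp}(s_1)=\{(y_0,a_1):a_1\in\mathrm{supp}(s_1(y_0))\}$ is $u_1(\cdot,\alpha_2)$-cyclically monotone for all $\alpha_2$. $\bar v_1^{\mathrm{CM}}=\sup_{s_1\ u_1\text{-cyclically monotone}}\ \max_{(\alpha_0,\alpha_2)\in B(s_1)}u_1(\alpha_0,s_1,\alpha_2)$. *)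

theory Defs
  imports "HOL-Analysis.Analysis"
begin

definition rg_dist :: "('a::finite \<Rightarrow> real) \<Rightarrow> bool" where
  "rg_dist p \<longleftrightarrow> (\<forall>a. 0 \<le> p a) \<and> sum p UNIV = 1"

definition rg_cyc_mono :: "('x \<Rightarrow> 'y \<Rightarrow> real) \<Rightarrow> ('x \<times> 'y) set \<Rightarrow> bool" where
  "rg_cyc_mono u S \<longleftrightarrow>
     (\<forall>(N::nat) (x::nat \<Rightarrow> 'x) (y::nat \<Rightarrow> 'y).
        1 \<le> N \<and> (\<forall>i<N. (x i, y i) \<in> S) \<longrightarrow>
        (\<Sum>i<N. u (x i) (y (Suc i mod N))) \<le> (\<Sum>i<N. u (x i) (y i)))"

definition rg_u1_at :: "('y0 \<Rightarrow> 'a1 \<Rightarrow> 'a2::finite \<Rightarrow> real) \<Rightarrow> ('a2 \<Rightarrow> real) \<Rightarrow> 'y0 \<Rightarrow> 'a1 \<Rightarrow> real" where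
  "rg_u1_at u1 \<alpha>2 y0 a1 = (\<Sum>a2\<in>UNIV. \<alpha>2 a2 * u1 y0 a1 a2)"

definition rg_cyc_separable :: "('y0 \<Rightarrow> 'a1 \<Rightarrow> 'a2::finite \<Rightarrow> real) \<Rightarrow> bool" where
  "rg_cyc_separable u1 \<longleftrightarrow>
     (\<forall>S. (\<exists>\<alpha>2. rg_dist \<alpha>2 \<and> rg_cyc_mono (rg_u1_at u1 \<alpha>2) S) \<longrightarrow>
          (\<forall>\<alpha>2. rg_dist \<alpha>2 \<longrightarrow> rg_cyc_mono (rg_u1_at u1 \<alpha>2) S))"

definition rg_stage1 :: "('y0 \<Rightarrow> 'a1::finite \<Rightarrow> real) \<Rightarrow> bool" where
  "rg_stage1 s1 \<longleftrightarrow> (\<forall>y0. rg_dist (s1 y0))"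

definition rg_supp1 :: "('y0 \<Rightarrow> 'a1 \<Rightarrow> real) \<Rightarrow> ('y0 \<times> 'a1) set" where
  "rg_supp1 s1 = {(y0, a1). 0 < s1 y0 a1}"

definition rg_cm_strategy :: "('y0 \<Rightarrow> 'a1 \<Rightarrow> 'a2::finite \<Rightarrow> real) \<Rightarrow> ('y0 \<Rightarrow> 'a1 \<Rightarrow> real) \<Rightarrow> bool" where
  "rg_cm_strategy u1 s1 \<longleftrightarrow>
     (\<forall>\<alpha>2. rg_dist \<alpha>2 \<longrightarrow> rg_cyc_mono (rg_u1_at u1 \<alpha>2) (rg_supp1 s1))"

definition rg_u0_s1 :: "('a0 \<Rightarrow> 'y0::finite \<Rightarrow> real) \<Rightarrow> ('a0 \<Rightarrow> 'a1::finite \<Rightarrow> real)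
    \<Rightarrow> ('y0 \<Rightarrow> 'a1 \<Rightarrow> real) \<Rightarrow> 'a0 \<Rightarrow> real" where
  "rg_u0_s1 \<rho>0 u0 s1 a0 = (\<Sum>y0\<in>UNIV. \<rho>0 a0 y0 * (\<Sum>a1\<in>UNIV. s1 y0 a1 * u0 a0 a1))"

definition rg_u2_s1 :: "('a0::finite \<Rightarrow> 'y0::finite \<Rightarrow> real) \<Rightarrow> ('y0 \<Rightarrow> 'a1::finite \<Rightarrow> 'a2 \<Rightarrow> real)
    \<Rightarrow> ('a0 \<Rightarrow> real) \<Rightarrow> ('y0 \<Rightarrow> 'a1 \<Rightarrow> real) \<Rightarrow> 'a2 \<Rightarrow> real" where
  "rg_u2_s1 \<rho>0 u2 \<alpha>0 s1 a2 =
     (\<Sum>a0\<in>UNIV. \<alpha>0 a0 * (\<Sum>y0\<in>UNIV. \<rho>0 a0 y0 * (\<Sum>a1\<in>UNIV. s1 y0 a1 * u2 y0 a1 a2)))"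

definition rg_u1_stage :: "('a0::finite \<Rightarrow> 'y0::finite \<Rightarrow> real) \<Rightarrow> ('y0 \<Rightarrow> 'a1::finite \<Rightarrow> 'a2::finite \<Rightarrow> real)
    \<Rightarrow> ('a0 \<Rightarrow> real) \<Rightarrow> ('y0 \<Rightarrow> 'a1 \<Rightarrow> real) \<Rightarrow> ('a2 \<Rightarrow> real) \<Rightarrow> real" where
  "rg_u1_stage \<rho>0 u1 \<alpha>0 s1 \<alpha>2 =
     (\<Sum>a0\<in>UNIV. \<alpha>0 a0 * (\<Sum>y0\<in>UNIV. \<rho>0 a0 y0 *
        (\<Sum>a1\<in>UNIV. s1 y0 a1 * (\<Sum>a2\<in>UNIV. \<alpha>2 a2 * u1 y0 a1 a2))))"

definition rg_B :: "('a0::finite \<Rightarrow> 'y0::finite \<Rightarrow> real) \<Rightarrow> ('a0 \<Rightarrow> 'a1::finite \<Rightarrow> real)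
    \<Rightarrow> ('y0 \<Rightarrow> 'a1 \<Rightarrow> 'a2::finite \<Rightarrow> real) \<Rightarrow> ('y0 \<Rightarrow> 'a1 \<Rightarrow> real)
    \<Rightarrow> (('a0 \<Rightarrow> real) \<times> ('a2 \<Rightarrow> real)) set" where
  "rg_B \<rho>0 u0 u2 s1 = {(\<alpha>0, \<alpha>2). rg_dist \<alpha>0 \<and> rg_dist \<alpha>2 \<and>
      (\<forall>a0. 0 < \<alpha>0 a0 \<longrightarrow> (\<forall>a0'. rg_u0_s1 \<rho>0 u0 s1 a0' \<le> rg_u0_s1 \<rho>0 u0 s1 a0)) \<and>
      (\<forall>a2. 0 < \<alpha>2 a2 \<longrightarrow> (\<forall>a2'. rg_u2_s1 \<rho>0 u2 \<alpha>0 s1 a2' \<le> rg_u2_s1 \<rho>0 u2 \<alpha>0 s1 a2))}"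

text \<open>bar v_1^CM = sup over u_1-cyclically monotone s_1 of max over B(s_1) of u_1(alpha_0,s_1,alpha_2)
  (the max is written as a SUP; it is attained).\<close>
definition rg_vCM :: "('a0::finite \<Rightarrow> 'y0::finite \<Rightarrow> real) \<Rightarrow> ('a0 \<Rightarrow> 'a1::finite \<Rightarrow> real)
    \<Rightarrow> ('y0 \<Rightarrow> 'a1 \<Rightarrow> 'a2::finite \<Rightarrow> real) \<Rightarrow> ('y0 \<Rightarrow> 'a1 \<Rightarrow> 'a2 \<Rightarrow> real) \<Rightarrow> ereal" where
  "rg_vCM \<rho>0 u0 u1 u2 =
     (SUP s1 \<in> {s1. rg_stage1 s1 \<and> rg_cm_strategy u1 s1}.
        (SUP p \<in> rg_B \<rho>0 u0 u2 s1. ereal (rg_u1_stage \<rho>0 u1 (fst p) s1 (snd p))))"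

text \<open>A period outcome is (a0, y0, a1, a2, y1). Histories are lists in chronological order.
  Public history: list of y1's. Private history of player 1: list of (y0, a1, y1).\<close>

definition rg_pub :: "'a0 \<times> 'y0 \<times> 'a1 \<times> 'a2 \<times> 'y1 \<Rightarrow> 'y1" where
  "rg_pub r = (case r of (a0, y0, a1, a2, y1) \<Rightarrow> y1)"

definition rg_priv :: "'a0 \<times> 'y0 \<times> 'a1 \<times> 'a2 \<times> 'y1 \<Rightarrow> 'y0 \<times> 'a1 \<times> 'y1" where
  "rg_priv r = (case r of (a0, y0, a1, a2, y1) \<Rightarrow> (y0, a1, y1))"

definition rg_hist_prob ::
  "('a0 \<Rightarrow> 'y0 \<Rightarrow> real) \<Rightarrow> ('a1 \<Rightarrow> 'a2 \<Rightarrow> 'y1 \<Rightarrow> real)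
   \<Rightarrow> ('y1 list \<Rightarrow> 'a0 \<Rightarrow> real) \<Rightarrow> (('y0 \<times> 'a1 \<times> 'y1) list \<Rightarrow> 'y0 \<Rightarrow> 'a1 \<Rightarrow> real)
   \<Rightarrow> ('y1 list \<Rightarrow> 'a2 \<Rightarrow> real) \<Rightarrow> ('a0 \<times> 'y0 \<times> 'a1 \<times> 'a2 \<times> 'y1) list \<Rightarrow> real" where
  "rg_hist_prob \<rho>0 \<rho>1 \<sigma>0 \<tau>1 \<sigma>2 h =
     (\<Prod>i<length h. case h ! i of (a0, y0, a1, a2, y1) \<Rightarrow>
        \<sigma>0 (map rg_pub (take i h)) a0 * \<rho>0 a0 y0 *
        \<tau>1 (map rg_priv (take i h)) y0 a1 *
        \<sigma>2 (map rg_pub (take i h)) a2 * \<rho>1 a1 a2 y1)"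

definition rg_exp_stage ::
  "('a0::finite \<Rightarrow> 'y0::finite \<Rightarrow> real) \<Rightarrow> ('a1::finite \<Rightarrow> 'a2::finite \<Rightarrow> 'y1::finite \<Rightarrow> real)
   \<Rightarrow> ('y1 list \<Rightarrow> 'a0 \<Rightarrow> real) \<Rightarrow> (('y0 \<times> 'a1 \<times> 'y1) list \<Rightarrow> 'y0 \<Rightarrow> 'a1 \<Rightarrow> real)
   \<Rightarrow> ('y1 list \<Rightarrow> 'a2 \<Rightarrow> real) \<Rightarrow> nat \<Rightarrow> ('a0 \<times> 'y0 \<times> 'a1 \<times> 'a2 \<times> 'y1 \<Rightarrow> real) \<Rightarrow> real" where
  "rg_exp_stage \<rho>0 \<rho>1 \<sigma>0 \<tau>1 \<sigma>2 t f =
     (\<Sum>h\<in>{h. length h = Suc t}. rg_hist_prob \<rho>0 \<rho>1 \<sigma>0 \<tau>1 \<sigma>2 h * f (last h))"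

text \<open>Types: None = rational type omega_R; Some s1 = commitment type omega_{s1}.\<close>
definition rg_type_strat ::
  "(('y0 \<times> 'a1 \<times> 'y1) list \<Rightarrow> 'y0 \<Rightarrow> 'a1 \<Rightarrow> real) \<Rightarrow> ('y0 \<Rightarrow> 'a1 \<Rightarrow> real) option
   \<Rightarrow> (('y0 \<times> 'a1 \<times> 'y1) list \<Rightarrow> 'y0 \<Rightarrow> 'a1 \<Rightarrow> real)" where
  "rg_type_strat \<sigma>1 \<omega> = (case \<omega> of None \<Rightarrow> \<sigma>1 | Some s1 \<Rightarrow> (\<lambda>_ y0. s1 y0))"

text \<open>Prior: nonnegative, sums to 1, countable support Omega containing omega_R,
  commitment types are stage strategies. Omega is by definition the support (full support).\<close>
definition rg_prior :: "(('y0 \<Rightarrow> 'a1::finite \<Rightarrow> real) option \<Rightarrow> real) \<Rightarrow> bool" where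
  "rg_prior \<mu>0 \<longleftrightarrow> (\<forall>\<omega>. 0 \<le> \<mu>0 \<omega>) \<and> (\<mu>0 has_sum 1) UNIV \<and>
     countable {\<omega>. \<mu>0 \<omega> \<noteq> 0} \<and> 0 < \<mu>0 None \<and>
     (\<forall>s1. \<mu>0 (Some s1) \<noteq> 0 \<longrightarrow> rg_stage1 s1)"

definition rg_exante ::
  "('a0::finite \<Rightarrow> 'y0::finite \<Rightarrow> real) \<Rightarrow> ('a1::finite \<Rightarrow> 'a2::finite \<Rightarrow> 'y1::finite \<Rightarrow> real)
   \<Rightarrow> (('y0 \<Rightarrow> 'a1 \<Rightarrow> real) option \<Rightarrow> real)
   \<Rightarrow> ('y1 list \<Rightarrow> 'a0 \<Rightarrow> real) \<Rightarrow> (('y0 \<times> 'a1 \<times> 'y1) list \<Rightarrow> 'y0 \<Rightarrow> 'a1 \<Rightarrow> real)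
   \<Rightarrow> ('y1 list \<Rightarrow> 'a2 \<Rightarrow> real) \<Rightarrow> nat \<Rightarrow> ('a0 \<times> 'y0 \<times> 'a1 \<times> 'a2 \<times> 'y1 \<Rightarrow> real) \<Rightarrow> real" where
  "rg_exante \<rho>0 \<rho>1 \<mu>0 \<sigma>0 \<sigma>1 \<sigma>2 t f =
     (\<Sum>\<^sub>\<infinity>\<omega>. \<mu>0 \<omega> * rg_exp_stage \<rho>0 \<rho>1 \<sigma>0 (rg_type_strat \<sigma>1 \<omega>) \<sigma>2 t f)"

definition rg_U1 ::
  "('a0::finite \<Rightarrow> 'y0::finite \<Rightarrow> real) \<Rightarrow> ('a1::finite \<Rightarrow> 'a2::finite \<Rightarrow> 'y1::finite \<Rightarrow> real)
   \<Rightarrow> ('y0 \<Rightarrow> 'a1 \<Rightarrow> 'a2 \<Rightarrow> real) \<Rightarrow> real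
   \<Rightarrow> ('y1 list \<Rightarrow> 'a0 \<Rightarrow> real) \<Rightarrow> (('y0 \<times> 'a1 \<times> 'y1) list \<Rightarrow> 'y0 \<Rightarrow> 'a1 \<Rightarrow> real)
   \<Rightarrow> ('y1 list \<Rightarrow> 'a2 \<Rightarrow> real) \<Rightarrow> real" where
  "rg_U1 \<rho>0 \<rho>1 u1 \<delta> \<sigma>0 \<sigma>1 \<sigma>2 =
     (1 - \<delta>) * (\<Sum>t. \<delta> ^ t * rg_exp_stage \<rho>0 \<rho>1 \<sigma>0 \<sigma>1 \<sigma>2 t
                       (\<lambda>(a0, y0, a1, a2, y1). u1 y0 a1 a2))"

definition rg_valid_pub :: "('y1 list \<Rightarrow> 'a::finite \<Rightarrow> real) \<Rightarrow> bool" where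
  "rg_valid_pub \<sigma> \<longleftrightarrow> (\<forall>p. rg_dist (\<sigma> p))"

definition rg_valid1 :: "(('y0 \<times> 'a1 \<times> 'y1) list \<Rightarrow> 'y0 \<Rightarrow> 'a1::finite \<Rightarrow> real) \<Rightarrow> bool" where
  "rg_valid1 \<sigma>1 \<longleftrightarrow> (\<forall>p y0. rg_dist (\<sigma>1 p y0))"

text \<open>Nash equilibrium: (sigma0, sigma2) give the (public-history-measurable) mixed actions of
  the short-lived players 0 and 2 of each period t (their values on public histories of length t);
  sigma1 is the rational type's behaviour strategy.\<close>
definition rg_NE ::
  "('a0::finite \<Rightarrow> 'y0::finite \<Rightarrow> real) \<Rightarrow> ('a1::finite \<Rightarrow> 'a2::finite \<Rightarrow> 'y1::finite \<Rightarrow> real)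
   \<Rightarrow> ('a0 \<Rightarrow> 'a1 \<Rightarrow> real) \<Rightarrow> ('y0 \<Rightarrow> 'a1 \<Rightarrow> 'a2 \<Rightarrow> real) \<Rightarrow> ('y0 \<Rightarrow> 'a1 \<Rightarrow> 'a2 \<Rightarrow> real)
   \<Rightarrow> (('y0 \<Rightarrow> 'a1 \<Rightarrow> real) option \<Rightarrow> real) \<Rightarrow> real
   \<Rightarrow> ('y1 list \<Rightarrow> 'a0 \<Rightarrow> real) \<Rightarrow> (('y0 \<times> 'a1 \<times> 'y1) list \<Rightarrow> 'y0 \<Rightarrow> 'a1 \<Rightarrow> real)
   \<Rightarrow> ('y1 list \<Rightarrow> 'a2 \<Rightarrow> real) \<Rightarrow> bool" where
  "rg_NE \<rho>0 \<rho>1 u0 u1 u2 \<mu>0 \<delta> \<sigma>0 \<sigma>1 \<sigma>2 \<longleftrightarrow>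
     rg_valid_pub \<sigma>0 \<and> rg_valid1 \<sigma>1 \<and> rg_valid_pub \<sigma>2 \<and>
     (\<forall>\<sigma>1'. rg_valid1 \<sigma>1' \<longrightarrow>
        rg_U1 \<rho>0 \<rho>1 u1 \<delta> \<sigma>0 \<sigma>1' \<sigma>2 \<le> rg_U1 \<rho>0 \<rho>1 u1 \<delta> \<sigma>0 \<sigma>1 \<sigma>2) \<and>
     (\<forall>t \<sigma>0'. rg_valid_pub \<sigma>0' \<and> (\<forall>p. length p \<noteq> t \<longrightarrow> \<sigma>0' p = \<sigma>0 p) \<longrightarrow>
        rg_exante \<rho>0 \<rho>1 \<mu>0 \<sigma>0' \<sigma>1 \<sigma>2 t (\<lambda>(a0, y0, a1, a2, y1). u0 a0 a1)
        \<le> rg_exante \<rho>0 \<rho>1 \<mu>0 \<sigma>0 \<sigma>1 \<sigma>2 t (\<lambda>(a0, y0, a1, a2, y1). u0 a0 a1)) \<and>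
     (\<forall>t \<sigma>2'. rg_valid_pub \<sigma>2' \<and> (\<forall>p. length p \<noteq> t \<longrightarrow> \<sigma>2' p = \<sigma>2 p) \<longrightarrow>
        rg_exante \<rho>0 \<rho>1 \<mu>0 \<sigma>0 \<sigma>1 \<sigma>2' t (\<lambda>(a0, y0, a1, a2, y1). u2 y0 a1 a2)
        \<le> rg_exante \<rho>0 \<rho>1 \<mu>0 \<sigma>0 \<sigma>1 \<sigma>2 t (\<lambda>(a0, y0, a1, a2, y1). u2 y0 a1 a2))"

definition rg_U1bar ::
  "('a0::finite \<Rightarrow> 'y0::finite \<Rightarrow> real) \<Rightarrow> ('a1::finite \<Rightarrow> 'a2::finite \<Rightarrow> 'y1::finite \<Rightarrow> real)
   \<Rightarrow> ('a0 \<Rightarrow> 'a1 \<Rightarrow> real) \<Rightarrow> ('y0 \<Rightarrow> 'a1 \<Rightarrow> 'a2 \<Rightarrow> real) \<Rightarrow> ('y0 \<Rightarrow> 'a1 \<Rightarrow> 'a2 \<Rightarrow> real)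
   \<Rightarrow> (('y0 \<Rightarrow> 'a1 \<Rightarrow> real) option \<Rightarrow> real) \<Rightarrow> real \<Rightarrow> ereal" where
  "rg_U1bar \<rho>0 \<rho>1 u0 u1 u2 \<mu>0 \<delta> =
     Sup {ereal (rg_U1 \<rho>0 \<rho>1 u1 \<delta> \<sigma>0 \<sigma>1 \<sigma>2) | \<sigma>0 \<sigma>1 \<sigma>2.
            rg_NE \<rho>0 \<rho>1 u0 u1 u2 \<mu>0 \<delta> \<sigma>0 \<sigma>1 \<sigma>2}"

end

theory Submission
  imports Defs
begin


lemma has_sum_sumI:
  fixes f :: "'i \<Rightarrow> 'a \<Rightarrow> real"
  assumes "finite I" "\<And>i. i \<in> I \<Longrightarrow> (f i has_sum s i) A"
  shows "((\<lambda>x. \<Sum>i\<in>I. f i x) has_sum (\<Sum>i\<in>I. s i)) A"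
  using assms
proof (induction I rule: finite_induct)
  case empty then show ?case by simp
next
  case (insert j I)
  have "((\<lambda>x. f j x + (\<Sum>i\<in>I. f i x)) has_sum (s j + (\<Sum>i\<in>I. s i))) A"
    by (rule has_sum_add) (use insert in auto)
  then show ?case using insert by simp
qed

lemma sum_UNIV_pair:
  "(\<Sum>r\<in>(UNIV::('a::finite \<times> 'b::finite) set). f r) = (\<Sum>a\<in>UNIV. \<Sum>b\<in>UNIV. f (a, b))"
  by (simp add: sum.cartesian_product)

definition shl :: "'b list \<Rightarrow> ('b list \<Rightarrow> 'c) \<Rightarrow> ('b list \<Rightarrow> 'c)" where
  "shl q f = (\<lambda>p. f (q @ p))"

lemma shl_Nil[simp]: "shl [] f = f" by (simp add: shl_def)
lemma shl_shl[simp]: "shl q (shl q' f) = shl (q' @ q) f" by (simp add: shl_def)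
lemma shl_apply: "shl q f p = f (q @ p)" by (simp add: shl_def)

definition rg_step :: "('a0 \<Rightarrow> 'y0 \<Rightarrow> real) \<Rightarrow> ('a1 \<Rightarrow> 'a2 \<Rightarrow> 'y1 \<Rightarrow> real)
   \<Rightarrow> ('y1 list \<Rightarrow> 'a0 \<Rightarrow> real) \<Rightarrow> (('y0 \<times> 'a1 \<times> 'y1) list \<Rightarrow> 'y0 \<Rightarrow> 'a1 \<Rightarrow> real)
   \<Rightarrow> ('y1 list \<Rightarrow> 'a2 \<Rightarrow> real) \<Rightarrow> ('a0 \<times> 'y0 \<times> 'a1 \<times> 'a2 \<times> 'y1) list \<Rightarrow> ('a0 \<times> 'y0 \<times> 'a1 \<times> 'a2 \<times> 'y1) \<Rightarrow> real" where
  "rg_step \<rho>0 \<rho>1 \<sigma>0 \<tau>1 \<sigma>2 h r = (case r of (a0, y0, a1, a2, y1) \<Rightarrow>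
        \<sigma>0 (map rg_pub h) a0 * \<rho>0 a0 y0 *
        \<tau>1 (map rg_priv h) y0 a1 *
        \<sigma>2 (map rg_pub h) a2 * \<rho>1 a1 a2 y1)"

lemma hp_alt: "rg_hist_prob \<rho>0 \<rho>1 \<sigma>0 \<tau>1 \<sigma>2 h = (\<Prod>i<length h. rg_step \<rho>0 \<rho>1 \<sigma>0 \<tau>1 \<sigma>2 (take i h) (h ! i))"
  by (simp add: rg_hist_prob_def rg_step_def)

lemma hp_Nil[simp]: "rg_hist_prob \<rho>0 \<rho>1 \<sigma>0 \<tau>1 \<sigma>2 [] = 1"
  by (simp add: hp_alt)

lemma hp_snoc: "rg_hist_prob \<rho>0 \<rho>1 \<sigma>0 \<tau>1 \<sigma>2 (h @ [r]) =
   rg_hist_prob \<rho>0 \<rho>1 \<sigma>0 \<tau>1 \<sigma>2 h * rg_step \<rho>0 \<rho>1 \<sigma>0 \<tau>1 \<sigma>2 h r"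
proof -
  have "(\<Prod>i<length (h@[r]). rg_step \<rho>0 \<rho>1 \<sigma>0 \<tau>1 \<sigma>2 (take i (h@[r])) ((h@[r]) ! i))
     = (\<Prod>i<length h. rg_step \<rho>0 \<rho>1 \<sigma>0 \<tau>1 \<sigma>2 (take i (h@[r])) ((h@[r]) ! i)) * rg_step \<rho>0 \<rho>1 \<sigma>0 \<tau>1 \<sigma>2 h r"
    by (simp add: prod.lessThan_Suc)
  also have "(\<Prod>i<length h. rg_step \<rho>0 \<rho>1 \<sigma>0 \<tau>1 \<sigma>2 (take i (h@[r])) ((h@[r]) ! i))
     = (\<Prod>i<length h. rg_step \<rho>0 \<rho>1 \<sigma>0 \<tau>1 \<sigma>2 (take i h) (h ! i))"
    by (rule prod.cong) (auto simp: nth_append)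
  finally show ?thesis by (simp add: hp_alt)
qed

lemma step_shift: "rg_step \<rho>0 \<rho>1 (shl (map rg_pub h1) \<sigma>0) (shl (map rg_priv h1) \<tau>1) (shl (map rg_pub h1) \<sigma>2) h2 r
   = rg_step \<rho>0 \<rho>1 \<sigma>0 \<tau>1 \<sigma>2 (h1 @ h2) r"
  by (simp add: rg_step_def shl_apply)

lemma hp_append: "rg_hist_prob \<rho>0 \<rho>1 \<sigma>0 \<tau>1 \<sigma>2 (h1 @ h2) =
   rg_hist_prob \<rho>0 \<rho>1 \<sigma>0 \<tau>1 \<sigma>2 h1 *
   rg_hist_prob \<rho>0 \<rho>1 (shl (map rg_pub h1) \<sigma>0) (shl (map rg_priv h1) \<tau>1) (shl (map rg_pub h1) \<sigma>2) h2"
proof (induction h2 rule: rev_induct)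
  case Nil then show ?case by simp
next
  case (snoc r h2)
  have "rg_hist_prob \<rho>0 \<rho>1 \<sigma>0 \<tau>1 \<sigma>2 (h1 @ h2 @ [r]) = rg_hist_prob \<rho>0 \<rho>1 \<sigma>0 \<tau>1 \<sigma>2 ((h1 @ h2) @ [r])" by simp
  also have "\<dots> = rg_hist_prob \<rho>0 \<rho>1 \<sigma>0 \<tau>1 \<sigma>2 (h1 @ h2) * rg_step \<rho>0 \<rho>1 \<sigma>0 \<tau>1 \<sigma>2 (h1 @ h2) r"
    by (rule hp_snoc)
  also have "\<dots> = rg_hist_prob \<rho>0 \<rho>1 \<sigma>0 \<tau>1 \<sigma>2 h1 *
   (rg_hist_prob \<rho>0 \<rho>1 (shl (map rg_pub h1) \<sigma>0) (shl (map rg_priv h1) \<tau>1) (shl (map rg_pub h1) \<sigma>2) h2 *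
    rg_step \<rho>0 \<rho>1 (shl (map rg_pub h1) \<sigma>0) (shl (map rg_priv h1) \<tau>1) (shl (map rg_pub h1) \<sigma>2) h2 r)"
    by (simp only: snoc step_shift mult.assoc)
  also have "\<dots> = rg_hist_prob \<rho>0 \<rho>1 \<sigma>0 \<tau>1 \<sigma>2 h1 *
   rg_hist_prob \<rho>0 \<rho>1 (shl (map rg_pub h1) \<sigma>0) (shl (map rg_priv h1) \<tau>1) (shl (map rg_pub h1) \<sigma>2) (h2 @ [r])"
    by (simp only: hp_snoc)
  finally show ?case .
qed

lemma hp_Cons: "rg_hist_prob \<rho>0 \<rho>1 \<sigma>0 \<tau>1 \<sigma>2 (r # h) =
   rg_step \<rho>0 \<rho>1 \<sigma>0 \<tau>1 \<sigma>2 [] r *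
   rg_hist_prob \<rho>0 \<rho>1 (shl [rg_pub r] \<sigma>0) (shl [rg_priv r] \<tau>1) (shl [rg_pub r] \<sigma>2) h"
proof -
  have "rg_hist_prob \<rho>0 \<rho>1 \<sigma>0 \<tau>1 \<sigma>2 (r # h) = rg_hist_prob \<rho>0 \<rho>1 \<sigma>0 \<tau>1 \<sigma>2 ([r] @ h)" by simp
  also have "\<dots> = rg_hist_prob \<rho>0 \<rho>1 \<sigma>0 \<tau>1 \<sigma>2 [r] *
   rg_hist_prob \<rho>0 \<rho>1 (shl (map rg_pub [r]) \<sigma>0) (shl (map rg_priv [r]) \<tau>1) (shl (map rg_pub [r]) \<sigma>2) h"
    by (rule hp_append)
  also have "rg_hist_prob \<rho>0 \<rho>1 \<sigma>0 \<tau>1 \<sigma>2 [r] = rg_hist_prob \<rho>0 \<rho>1 \<sigma>0 \<tau>1 \<sigma>2 ([] @ [r])" by simp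
  also have "\<dots> = rg_step \<rho>0 \<rho>1 \<sigma>0 \<tau>1 \<sigma>2 [] r" by (simp only: hp_snoc hp_Nil mult_1)
  finally show ?thesis by simp
qed

lemma lists_Suc_cons: "{h. length h = Suc n} = (\<lambda>(r, h). r # h) ` (UNIV \<times> {h. length h = n})"
  by (auto simp: length_Suc_conv image_iff)

lemma lists_Suc_snoc: "{h. length h = Suc n} = (\<lambda>(h, r). h @ [r]) ` ({h. length h = n} \<times> UNIV)"
proof (rule set_eqI, rule iffI)
  fix h :: "'a list" assume "h \<in> {h. length h = Suc n}"
  then have h: "length h = Suc n" by simp
  then have "h \<noteq> []" by auto
  then have "h = butlast h @ [last h]" by simp
  moreover have "length (butlast h) = n" using h by simp
  ultimately show "h \<in> (\<lambda>(h, r). h @ [r]) ` ({h. length h = n} \<times> UNIV)"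
    by (intro image_eqI[where x="(butlast h, last h)"]) auto
qed auto

lemma sum_lists_Suc_cons:
  fixes F :: "'a::finite list \<Rightarrow> 'b::comm_monoid_add"
  shows "(\<Sum>h\<in>{h. length h = Suc n}. F h) = (\<Sum>r\<in>UNIV. \<Sum>h\<in>{h. length h = n}. F (r # h))"
proof -
  have "inj_on (\<lambda>(r, h). r # h) (UNIV \<times> {h::'a list. length h = n})" by (auto simp: inj_on_def)
  then have "(\<Sum>h\<in>{h. length h = Suc n}. F h) = (\<Sum>x\<in>UNIV \<times> {h. length h = n}. F (case x of (r, h) \<Rightarrow> r # h))"
    by (simp add: lists_Suc_cons sum.reindex)
  also have "\<dots> = (\<Sum>r\<in>UNIV. \<Sum>h\<in>{h. length h = n}. F (r # h))"
    by (simp add: sum.cartesian_product split_def)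
  finally show ?thesis .
qed

lemma sum_lists_Suc_snoc:
  fixes F :: "'a::finite list \<Rightarrow> 'b::comm_monoid_add"
  shows "(\<Sum>h\<in>{h. length h = Suc n}. F h) = (\<Sum>h\<in>{h. length h = n}. \<Sum>r\<in>UNIV. F (h @ [r]))"
proof -
  have "inj_on (\<lambda>(h, r). h @ [r]) ({h::'a list. length h = n} \<times> UNIV)" by (auto simp: inj_on_def)
  then have "(\<Sum>h\<in>{h. length h = Suc n}. F h) = (\<Sum>x\<in>{h. length h = n} \<times> UNIV. F (case x of (h, r) \<Rightarrow> h @ [r]))"
    by (simp add: lists_Suc_snoc sum.reindex)
  also have "\<dots> = (\<Sum>h\<in>{h. length h = n}. \<Sum>r\<in>UNIV. F (h @ [r]))"
    by (simp add: sum.cartesian_product split_def)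
  finally show ?thesis .
qed


lemma dist_sum1: "rg_dist p \<Longrightarrow> sum p UNIV = 1" by (simp add: rg_dist_def)
lemma dist_nonneg: "rg_dist p \<Longrightarrow> 0 \<le> p a" by (simp add: rg_dist_def)

definition valid3 where
  "valid3 \<sigma>0 \<tau> \<sigma>2 \<longleftrightarrow> rg_valid_pub \<sigma>0 \<and> rg_valid1 \<tau> \<and> rg_valid_pub \<sigma>2"

lemma valid3_shl: "valid3 \<sigma>0 \<tau> \<sigma>2 \<Longrightarrow> valid3 (shl q \<sigma>0) (shl k \<tau>) (shl q \<sigma>2)"
  by (simp add: valid3_def rg_valid_pub_def rg_valid1_def shl_apply)

lemma valid3D:
  assumes "valid3 \<sigma>0 \<tau> \<sigma>2"
  shows "rg_dist (\<sigma>0 p)" "rg_dist (\<tau> k y0)" "rg_dist (\<sigma>2 p)"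
  using assms by (auto simp: valid3_def rg_valid_pub_def rg_valid1_def)

definition Mu :: "('y0::finite \<Rightarrow> 'a1::finite \<Rightarrow> 'a2::finite \<Rightarrow> real) \<Rightarrow> real" where "Mu u1 = Max (range (\<lambda>(y0, a1, a2). \<bar>u1 y0 a1 a2\<bar>))"

lemma Mu_bound: "\<bar>u1 y0 a1 a2\<bar> \<le> Mu (u1 :: 'y0::finite \<Rightarrow> 'a1::finite \<Rightarrow> 'a2::finite \<Rightarrow> real)"
  unfolding Mu_def by (rule Max_ge) (auto intro!: image_eqI[where x="(y0, a1, a2)"])

locale rgm =
  fixes \<rho>0 :: "'a0::finite \<Rightarrow> 'y0::finite \<Rightarrow> real"
    and \<rho>1 :: "'a1::finite \<Rightarrow> 'a2::finite \<Rightarrow> 'y1::finite \<Rightarrow> real"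
  assumes rho0: "\<forall>a0. rg_dist (\<rho>0 a0)"
    and rho1: "\<forall>a1 a2. rg_dist (\<rho>1 a1 a2)"
begin

lemma rho0_sum[simp]: "sum (\<rho>0 a0) UNIV = 1" using rho0 by (simp add: rg_dist_def)
lemma rho1_sum[simp]: "sum (\<rho>1 a1 a2) UNIV = 1" using rho1 by (simp add: rg_dist_def)
lemma rho0_nn: "0 \<le> \<rho>0 a0 y0" using rho0 by (simp add: rg_dist_def)
lemma rho1_nn: "0 \<le> \<rho>1 a1 a2 y1" using rho1 by (simp add: rg_dist_def)

lemma step_expand:
  "(\<Sum>r\<in>UNIV. rg_step \<rho>0 \<rho>1 \<sigma>0 \<tau> \<sigma>2 h r * F r) =
   (\<Sum>a0\<in>UNIV. \<Sum>y0\<in>UNIV. \<Sum>a1\<in>UNIV. \<Sum>a2\<in>UNIV. \<Sum>y1\<in>UNIV.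
      \<sigma>0 (map rg_pub h) a0 * \<rho>0 a0 y0 * \<tau> (map rg_priv h) y0 a1 * \<sigma>2 (map rg_pub h) a2 * \<rho>1 a1 a2 y1
      * F (a0, y0, a1, a2, y1))"
  by (simp add: sum_UNIV_pair rg_step_def)

lemma step_expand_noy1:
  "(\<Sum>r\<in>UNIV. rg_step \<rho>0 \<rho>1 \<sigma>0 \<tau> \<sigma>2 h r * (case r of (a0, y0, a1, a2, y1) \<Rightarrow> G a0 y0 a1 a2)) =
   (\<Sum>a0\<in>UNIV. \<sigma>0 (map rg_pub h) a0 * (\<Sum>y0\<in>UNIV. \<rho>0 a0 y0 * (\<Sum>a1\<in>UNIV. \<tau> (map rg_priv h) y0 a1 *
       (\<Sum>a2\<in>UNIV. \<sigma>2 (map rg_pub h) a2 * G a0 y0 a1 a2))))"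
proof -
  have "\<And>a0 y0 a1 a2. (\<Sum>y1\<in>UNIV. \<sigma>0 (map rg_pub h) a0 * \<rho>0 a0 y0 * \<tau> (map rg_priv h) y0 a1 * \<sigma>2 (map rg_pub h) a2 * \<rho>1 a1 a2 y1
      * G a0 y0 a1 a2) = \<sigma>0 (map rg_pub h) a0 * \<rho>0 a0 y0 * \<tau> (map rg_priv h) y0 a1 * \<sigma>2 (map rg_pub h) a2 * G a0 y0 a1 a2"
  proof -
    fix a0 y0 a1 a2
    have "(\<Sum>y1\<in>UNIV. \<sigma>0 (map rg_pub h) a0 * \<rho>0 a0 y0 * \<tau> (map rg_priv h) y0 a1 * \<sigma>2 (map rg_pub h) a2 * \<rho>1 a1 a2 y1
      * G a0 y0 a1 a2) = (\<sigma>0 (map rg_pub h) a0 * \<rho>0 a0 y0 * \<tau> (map rg_priv h) y0 a1 * \<sigma>2 (map rg_pub h) a2 * G a0 y0 a1 a2) * (\<Sum>y1\<in>UNIV. \<rho>1 a1 a2 y1)"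
      unfolding sum_distrib_left by (simp add: mult_ac del: rho1_sum)
    then show "?thesis a0 y0 a1 a2" by simp
  qed
  then show ?thesis
    by (simp add: step_expand sum_distrib_left mult_ac)
qed

lemma valid3_nn:
  assumes "valid3 \<sigma>0 \<tau> \<sigma>2"
  shows "0 \<le> \<sigma>0 p a" "0 \<le> \<tau> k y0 a1" "0 \<le> \<sigma>2 p a2"
  using dist_nonneg[OF valid3D(1)[OF assms]] dist_nonneg[OF valid3D(2)[OF assms]] dist_nonneg[OF valid3D(3)[OF assms]]
  by auto

lemma step_nonneg: assumes v: "valid3 \<sigma>0 \<tau> \<sigma>2" shows "0 \<le> rg_step \<rho>0 \<rho>1 \<sigma>0 \<tau> \<sigma>2 h r"
  by (cases r) (simp add: rg_step_def mult_nonneg_nonneg rho0_nn rho1_nn valid3_nn[OF v])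

lemma step_sum: "valid3 \<sigma>0 \<tau> \<sigma>2 \<Longrightarrow> (\<Sum>r\<in>UNIV. rg_step \<rho>0 \<rho>1 \<sigma>0 \<tau> \<sigma>2 h r) = 1"
proof -
  assume v: "valid3 \<sigma>0 \<tau> \<sigma>2"
  have "(\<Sum>r\<in>UNIV. rg_step \<rho>0 \<rho>1 \<sigma>0 \<tau> \<sigma>2 h r) =
     (\<Sum>r\<in>UNIV. rg_step \<rho>0 \<rho>1 \<sigma>0 \<tau> \<sigma>2 h r * (case r of (a0, y0, a1, a2, y1) \<Rightarrow> 1))"
    by (simp add: split_def)
  also have "\<dots> = (\<Sum>a0\<in>UNIV. \<sigma>0 (map rg_pub h) a0 * (\<Sum>y0\<in>UNIV. \<rho>0 a0 y0 * (\<Sum>a1\<in>UNIV. \<tau> (map rg_priv h) y0 a1 *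
       (\<Sum>a2\<in>UNIV. \<sigma>2 (map rg_pub h) a2 * 1))))"
    by (rule step_expand_noy1)
  also have "\<dots> = 1"
    using valid3D[OF v] by (simp add: dist_sum1 sum_distrib_left[symmetric])
  finally show ?thesis .
qed

lemma hp_nonneg: "valid3 \<sigma>0 \<tau> \<sigma>2 \<Longrightarrow> 0 \<le> rg_hist_prob \<rho>0 \<rho>1 \<sigma>0 \<tau> \<sigma>2 h"
  by (simp add: hp_alt prod_nonneg step_nonneg)

lemma hp_sum: "valid3 \<sigma>0 \<tau> \<sigma>2 \<Longrightarrow> (\<Sum>h\<in>{h. length h = n}. rg_hist_prob \<rho>0 \<rho>1 \<sigma>0 \<tau> \<sigma>2 h) = 1"
proof (induction n)
  case 0 then show ?case by simp
next
  case (Suc n)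
  have "(\<Sum>h\<in>{h. length h = Suc n}. rg_hist_prob \<rho>0 \<rho>1 \<sigma>0 \<tau> \<sigma>2 h)
     = (\<Sum>h\<in>{h. length h = n}. \<Sum>r\<in>UNIV. rg_hist_prob \<rho>0 \<rho>1 \<sigma>0 \<tau> \<sigma>2 h * rg_step \<rho>0 \<rho>1 \<sigma>0 \<tau> \<sigma>2 h r)"
    by (simp add: sum_lists_Suc_snoc hp_snoc)
  also have "\<dots> = (\<Sum>h\<in>{h. length h = n}. rg_hist_prob \<rho>0 \<rho>1 \<sigma>0 \<tau> \<sigma>2 h)"
    by (simp add: sum_distrib_left[symmetric] step_sum Suc.prems)
  finally show ?case using Suc by simp
qed

lemma hp_le1: "valid3 \<sigma>0 \<tau> \<sigma>2 \<Longrightarrow> length h = n \<Longrightarrow> rg_hist_prob \<rho>0 \<rho>1 \<sigma>0 \<tau> \<sigma>2 h \<le> 1"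
proof -
  assume v: "valid3 \<sigma>0 \<tau> \<sigma>2" and l: "length h = n"
  have "rg_hist_prob \<rho>0 \<rho>1 \<sigma>0 \<tau> \<sigma>2 h \<le> (\<Sum>h\<in>{h. length h = n}. rg_hist_prob \<rho>0 \<rho>1 \<sigma>0 \<tau> \<sigma>2 h)"
    by (rule member_le_sum) (use l hp_nonneg[OF v] in \<open>auto simp: finite_list_length\<close>)
  then show ?thesis using hp_sum[OF v] by simp
qed

lemma exp_snoc: "rg_exp_stage \<rho>0 \<rho>1 \<sigma>0 \<tau> \<sigma>2 t f =
  (\<Sum>h\<in>{h. length h = t}. rg_hist_prob \<rho>0 \<rho>1 \<sigma>0 \<tau> \<sigma>2 h * (\<Sum>r\<in>UNIV. rg_step \<rho>0 \<rho>1 \<sigma>0 \<tau> \<sigma>2 h r * f r))"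
  by (simp add: rg_exp_stage_def sum_lists_Suc_snoc hp_snoc sum_distrib_left mult_ac)

lemma exp_zero: "rg_exp_stage \<rho>0 \<rho>1 \<sigma>0 \<tau> \<sigma>2 0 f = (\<Sum>r\<in>UNIV. rg_step \<rho>0 \<rho>1 \<sigma>0 \<tau> \<sigma>2 [] r * f r)"
  by (simp add: exp_snoc)

lemma exp_cons: "rg_exp_stage \<rho>0 \<rho>1 \<sigma>0 \<tau> \<sigma>2 (Suc t) f =
  (\<Sum>r\<in>UNIV. rg_step \<rho>0 \<rho>1 \<sigma>0 \<tau> \<sigma>2 [] r *
     rg_exp_stage \<rho>0 \<rho>1 (shl [rg_pub r] \<sigma>0) (shl [rg_priv r] \<tau>) (shl [rg_pub r] \<sigma>2) t f)"
proof -
  have "rg_exp_stage \<rho>0 \<rho>1 \<sigma>0 \<tau> \<sigma>2 (Suc t) f =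
    (\<Sum>r\<in>UNIV. \<Sum>h\<in>{h. length h = Suc t}. rg_hist_prob \<rho>0 \<rho>1 \<sigma>0 \<tau> \<sigma>2 (r # h) * f (last (r # h)))"
    unfolding rg_exp_stage_def by (rule sum_lists_Suc_cons)
  also have "\<dots> = (\<Sum>r\<in>UNIV. \<Sum>h\<in>{h. length h = Suc t}. rg_step \<rho>0 \<rho>1 \<sigma>0 \<tau> \<sigma>2 [] r *
      (rg_hist_prob \<rho>0 \<rho>1 (shl [rg_pub r] \<sigma>0) (shl [rg_priv r] \<tau>) (shl [rg_pub r] \<sigma>2) h * f (last h)))"
    by (intro sum.cong refl) (auto simp: hp_Cons)
  finally show ?thesis by (simp add: rg_exp_stage_def sum_distrib_left)
qed

lemma exp_bound:
  assumes v: "valid3 \<sigma>0 \<tau> \<sigma>2" and f: "\<And>r. \<bar>f r\<bar> \<le> M"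
  shows "\<bar>rg_exp_stage \<rho>0 \<rho>1 \<sigma>0 \<tau> \<sigma>2 t f\<bar> \<le> M"
proof -
  have "\<bar>rg_exp_stage \<rho>0 \<rho>1 \<sigma>0 \<tau> \<sigma>2 t f\<bar> \<le> (\<Sum>h\<in>{h. length h = Suc t}. \<bar>rg_hist_prob \<rho>0 \<rho>1 \<sigma>0 \<tau> \<sigma>2 h * f (last h)\<bar>)"
    unfolding rg_exp_stage_def by (rule sum_abs)
  also have "\<dots> \<le> (\<Sum>h\<in>{h. length h = Suc t}. rg_hist_prob \<rho>0 \<rho>1 \<sigma>0 \<tau> \<sigma>2 h * M)"
    by (intro sum_mono) (simp add: abs_mult hp_nonneg[OF v] mult_left_mono f)
  also have "\<dots> = M" by (simp add: sum_distrib_right[symmetric] hp_sum[OF v])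
  finally show ?thesis .
qed

definition fu1 :: "('y0 \<Rightarrow> 'a1 \<Rightarrow> 'a2 \<Rightarrow> real) \<Rightarrow> 'a0 \<times> 'y0 \<times> 'a1 \<times> 'a2 \<times> 'y1 \<Rightarrow> real" where
  "fu1 u1 = (\<lambda>(a0, y0, a1, a2, y1). u1 y0 a1 a2)"

lemma U1_alt: "rg_U1 \<rho>0 \<rho>1 u1 \<delta> \<sigma>0 \<tau> \<sigma>2 = (1 - \<delta>) * (\<Sum>t. \<delta> ^ t * rg_exp_stage \<rho>0 \<rho>1 \<sigma>0 \<tau> \<sigma>2 t (fu1 u1))"
  by (simp add: rg_U1_def fu1_def)

lemma summable_disc:
  fixes e :: "nat \<Rightarrow> real"
  assumes "0 \<le> \<delta>" "\<delta> < 1" "\<And>t. \<bar>e t\<bar> \<le> M"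
  shows "summable (\<lambda>t. \<delta> ^ t * e t)"
proof -
  have "\<exists>N. \<forall>n\<ge>N. norm (\<delta> ^ n * e n) \<le> M * \<delta> ^ n"
    using assms by (intro exI[of _ 0] allI impI) (simp add: abs_mult mult.commute[of "\<delta> ^ _"] mult_right_mono)
  moreover have "summable (\<lambda>n. M * \<delta> ^ n)" using assms by (intro summable_mult summable_geometric) auto
  ultimately show ?thesis by (rule summable_comparison_test)
qed

lemma fu1_bound: "\<bar>fu1 u1 r\<bar> \<le> Mu u1"
  by (cases r) (simp add: fu1_def Mu_bound)

lemma U1_rec:
  assumes v: "valid3 \<sigma>0 \<tau> \<sigma>2" and d: "0 \<le> \<delta>" "\<delta> < 1"
  shows "rg_U1 \<rho>0 \<rho>1 u1 \<delta> \<sigma>0 \<tau> \<sigma>2 =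
    (1 - \<delta>) * (\<Sum>r\<in>UNIV. rg_step \<rho>0 \<rho>1 \<sigma>0 \<tau> \<sigma>2 [] r * fu1 u1 r) +
    \<delta> * (\<Sum>r\<in>UNIV. rg_step \<rho>0 \<rho>1 \<sigma>0 \<tau> \<sigma>2 [] r *
       rg_U1 \<rho>0 \<rho>1 u1 \<delta> (shl [rg_pub r] \<sigma>0) (shl [rg_priv r] \<tau>) (shl [rg_pub r] \<sigma>2))"
proof -
  define e where "e = (\<lambda>t. rg_exp_stage \<rho>0 \<rho>1 \<sigma>0 \<tau> \<sigma>2 t (fu1 u1))"
  define e' where "e' = (\<lambda>(r::'a0 \<times> 'y0 \<times> 'a1 \<times> 'a2 \<times> 'y1) t. rg_exp_stage \<rho>0 \<rho>1 (shl [rg_pub r] \<sigma>0) (shl [rg_priv r] \<tau>) (shl [rg_pub r] \<sigma>2) t (fu1 u1))"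
  have sm: "summable (\<lambda>t. \<delta> ^ t * e t)"
    using d by (intro summable_disc[where M="Mu u1"]) (auto simp: e_def intro!: exp_bound[OF v] fu1_bound)
  have sm': "summable (\<lambda>t. \<delta> ^ t * e' r t)" for r
    using d by (intro summable_disc[where M="Mu u1"]) (auto simp: e'_def intro!: exp_bound valid3_shl[OF v] fu1_bound)
  have "(\<Sum>t. \<delta> ^ t * e t) = \<delta> ^ 0 * e 0 + (\<Sum>t. \<delta> ^ Suc t * e (Suc t))"
    using suminf_split_head[OF sm] by simp
  also have "(\<Sum>t. \<delta> ^ Suc t * e (Suc t)) = (\<Sum>t. \<Sum>r\<in>UNIV. \<delta> * (rg_step \<rho>0 \<rho>1 \<sigma>0 \<tau> \<sigma>2 [] r * (\<delta> ^ t * e' r t)))"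
    by (simp add: e_def e'_def exp_cons sum_distrib_left mult_ac)
  also have "\<dots> = (\<Sum>r\<in>UNIV. \<Sum>t. \<delta> * (rg_step \<rho>0 \<rho>1 \<sigma>0 \<tau> \<sigma>2 [] r * (\<delta> ^ t * e' r t)))"
    by (rule suminf_sum) (intro summable_mult sm')
  also have "\<dots> = (\<Sum>r\<in>UNIV. \<delta> * (rg_step \<rho>0 \<rho>1 \<sigma>0 \<tau> \<sigma>2 [] r * (\<Sum>t. \<delta> ^ t * e' r t)))"
    by (intro sum.cong refl) (simp add: suminf_mult summable_mult sm')
  finally have eq: "(\<Sum>t. \<delta> ^ t * e t) = e 0 + \<delta> * (\<Sum>r\<in>UNIV. rg_step \<rho>0 \<rho>1 \<sigma>0 \<tau> \<sigma>2 [] r * (\<Sum>t. \<delta> ^ t * e' r t))"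
    by (simp add: sum_distrib_left)
  have A: "rg_U1 \<rho>0 \<rho>1 u1 \<delta> \<sigma>0 \<tau> \<sigma>2 = (1 - \<delta>) * (\<Sum>t. \<delta> ^ t * e t)"
    by (simp add: U1_alt e_def)
  have B: "rg_U1 \<rho>0 \<rho>1 u1 \<delta> (shl [rg_pub r] \<sigma>0) (shl [rg_priv r] \<tau>) (shl [rg_pub r] \<sigma>2) = (1 - \<delta>) * (\<Sum>t. \<delta> ^ t * e' r t)" for r
    by (simp add: U1_alt e'_def)
  have C: "e 0 = (\<Sum>r\<in>UNIV. rg_step \<rho>0 \<rho>1 \<sigma>0 \<tau> \<sigma>2 [] r * fu1 u1 r)"
    by (simp add: e_def exp_zero)
  have D: "(\<Sum>r\<in>UNIV. rg_step \<rho>0 \<rho>1 \<sigma>0 \<tau> \<sigma>2 [] r * ((1 - \<delta>) * (\<Sum>t. \<delta> ^ t * e' r t)))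
     = (1 - \<delta>) * (\<Sum>r\<in>UNIV. rg_step \<rho>0 \<rho>1 \<sigma>0 \<tau> \<sigma>2 [] r * (\<Sum>t. \<delta> ^ t * e' r t))"
    by (simp add: sum_distrib_left mult_ac)
  show ?thesis unfolding A B eq D C[symmetric] by (simp add: algebra_simps)
qed

end


context rgm begin

lemma dev_decomp:
  assumes "valid3 \<sigma>0 \<tau> \<sigma>2" "valid3 \<sigma>0 \<tau>' \<sigma>2" "0 \<le> \<delta>" "\<delta> < 1"
    and "\<And>k. (\<forall>k'. k \<noteq> \<pi> @ k') \<Longrightarrow> \<tau>' k = \<tau> k"
  shows "rg_U1 \<rho>0 \<rho>1 u1 \<delta> \<sigma>0 \<tau>' \<sigma>2 - rg_U1 \<rho>0 \<rho>1 u1 \<delta> \<sigma>0 \<tau> \<sigma>2 =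
    \<delta> ^ length \<pi> * (\<Sum>h\<in>{h. length h = length \<pi>}. if map rg_priv h = \<pi> then
       rg_hist_prob \<rho>0 \<rho>1 \<sigma>0 \<tau> \<sigma>2 h *
       (rg_U1 \<rho>0 \<rho>1 u1 \<delta> (shl (map rg_pub h) \<sigma>0) (shl (map rg_priv h) \<tau>') (shl (map rg_pub h) \<sigma>2) -
        rg_U1 \<rho>0 \<rho>1 u1 \<delta> (shl (map rg_pub h) \<sigma>0) (shl (map rg_priv h) \<tau>) (shl (map rg_pub h) \<sigma>2)) else 0)"
  using assms
proof (induction \<pi> arbitrary: \<sigma>0 \<tau> \<tau>' \<sigma>2)
  case Nil
  have "{h. length h = length []} = {[]}" by auto
  then show ?case by simp
next
  case (Cons c \<pi>)
  have t0: "\<tau>' [] = \<tau> []" using Cons.prems(5)[of "[]"] by auto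
  have st: "rg_step \<rho>0 \<rho>1 \<sigma>0 \<tau>' \<sigma>2 [] r = rg_step \<rho>0 \<rho>1 \<sigma>0 \<tau> \<sigma>2 [] r" for r
    by (simp add: rg_step_def t0)
  define D where "D = (\<lambda>h::('a0 \<times> 'y0 \<times> 'a1 \<times> 'a2 \<times> 'y1) list. rg_U1 \<rho>0 \<rho>1 u1 \<delta> (shl (map rg_pub h) \<sigma>0) (shl (map rg_priv h) \<tau>') (shl (map rg_pub h) \<sigma>2) -
        rg_U1 \<rho>0 \<rho>1 u1 \<delta> (shl (map rg_pub h) \<sigma>0) (shl (map rg_priv h) \<tau>) (shl (map rg_pub h) \<sigma>2))"
  have trm: "rg_step \<rho>0 \<rho>1 \<sigma>0 \<tau> \<sigma>2 [] r * D [r] =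
     \<delta> ^ length \<pi> * (\<Sum>h\<in>{h. length h = length \<pi>}. if map rg_priv (r # h) = c # \<pi> then
       rg_hist_prob \<rho>0 \<rho>1 \<sigma>0 \<tau> \<sigma>2 (r # h) * D (r # h) else 0)" for r
  proof (cases "rg_priv r = c")
    case False
    have "shl [rg_priv r] \<tau>' = shl [rg_priv r] \<tau>"
    proof (rule ext)
      fix x show "shl [rg_priv r] \<tau>' x = shl [rg_priv r] \<tau> x"
        using False by (simp add: shl_apply Cons.prems(5))
    qed
    then show ?thesis using False by (simp add: D_def)
  next
    case True
    have IH: "rg_U1 \<rho>0 \<rho>1 u1 \<delta> (shl [rg_pub r] \<sigma>0) (shl [rg_priv r] \<tau>') (shl [rg_pub r] \<sigma>2) -
        rg_U1 \<rho>0 \<rho>1 u1 \<delta> (shl [rg_pub r] \<sigma>0) (shl [rg_priv r] \<tau>) (shl [rg_pub r] \<sigma>2) =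
      \<delta> ^ length \<pi> * (\<Sum>h\<in>{h. length h = length \<pi>}. if map rg_priv h = \<pi> then
       rg_hist_prob \<rho>0 \<rho>1 (shl [rg_pub r] \<sigma>0) (shl [rg_priv r] \<tau>) (shl [rg_pub r] \<sigma>2) h * D (r # h) else 0)"
    proof -
      have v1: "valid3 (shl [rg_pub r] \<sigma>0) (shl [rg_priv r] \<tau>) (shl [rg_pub r] \<sigma>2)"
        by (rule valid3_shl) (rule Cons.prems(1))
      have v2: "valid3 (shl [rg_pub r] \<sigma>0) (shl [rg_priv r] \<tau>') (shl [rg_pub r] \<sigma>2)"
        by (rule valid3_shl) (rule Cons.prems(2))
      have cond: "\<And>k. (\<forall>k'. k \<noteq> \<pi> @ k') \<Longrightarrow> shl [rg_priv r] \<tau>' k = shl [rg_priv r] \<tau> k"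
        by (simp add: shl_apply True Cons.prems(5))
      show ?thesis
        using Cons.IH[OF v1 v2 Cons.prems(3) Cons.prems(4) cond] unfolding D_def by (simp cong: if_cong)
    qed
    have "D [r] = rg_U1 \<rho>0 \<rho>1 u1 \<delta> (shl [rg_pub r] \<sigma>0) (shl [rg_priv r] \<tau>') (shl [rg_pub r] \<sigma>2) -
        rg_U1 \<rho>0 \<rho>1 u1 \<delta> (shl [rg_pub r] \<sigma>0) (shl [rg_priv r] \<tau>) (shl [rg_pub r] \<sigma>2)"
      by (simp add: D_def)
    then have "rg_step \<rho>0 \<rho>1 \<sigma>0 \<tau> \<sigma>2 [] r * D [r] = rg_step \<rho>0 \<rho>1 \<sigma>0 \<tau> \<sigma>2 [] r * (\<delta> ^ length \<pi> * (\<Sum>h\<in>{h. length h = length \<pi>}. if map rg_priv h = \<pi> then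
       rg_hist_prob \<rho>0 \<rho>1 (shl [rg_pub r] \<sigma>0) (shl [rg_priv r] \<tau>) (shl [rg_pub r] \<sigma>2) h * D (r # h) else 0))"
      using IH by simp
    also have "\<dots> = \<delta> ^ length \<pi> * (\<Sum>h\<in>{h. length h = length \<pi>}. if map rg_priv (r # h) = c # \<pi> then
       rg_hist_prob \<rho>0 \<rho>1 \<sigma>0 \<tau> \<sigma>2 (r # h) * D (r # h) else 0)"
      by (simp add: sum_distrib_left hp_Cons True mult_ac if_distrib cong: if_cong)
    finally show ?thesis .
  qed
  have "rg_U1 \<rho>0 \<rho>1 u1 \<delta> \<sigma>0 \<tau>' \<sigma>2 - rg_U1 \<rho>0 \<rho>1 u1 \<delta> \<sigma>0 \<tau> \<sigma>2 =
     \<delta> * (\<Sum>r\<in>UNIV. rg_step \<rho>0 \<rho>1 \<sigma>0 \<tau> \<sigma>2 [] r * D [r])"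
    by (simp add: U1_rec[OF Cons.prems(1) Cons.prems(3,4)] U1_rec[OF Cons.prems(2) Cons.prems(3,4)] st D_def
        sum_subtractf[symmetric] right_diff_distrib, simp add: sum_subtractf right_diff_distrib)
  also have "\<dots> = \<delta> ^ length (c # \<pi>) * (\<Sum>h\<in>{h. length h = length (c # \<pi>)}. if map rg_priv h = c # \<pi> then
       rg_hist_prob \<rho>0 \<rho>1 \<sigma>0 \<tau> \<sigma>2 h * D h else 0)"
    by (simp only: trm sum_lists_Suc_cons length_Cons sum_distrib_left power_Suc mult.assoc)
  finally show ?case by (simp only: D_def)
qed

end


definition dev0 :: "(('y0 \<times> 'a1 \<times> 'y1) list \<Rightarrow> 'y0 \<Rightarrow> 'a1 \<Rightarrow> real) \<Rightarrow> ('y0 \<times> 'a1 \<times> 'y1) list \<Rightarrow> 'y0 \<Rightarrow> 'a1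
   \<Rightarrow> ('y0 \<times> 'a1 \<times> 'y1) list \<Rightarrow> 'y0 \<Rightarrow> (('y0 \<times> 'a1 \<times> 'y1) list \<Rightarrow> 'y0 \<Rightarrow> 'a1 \<Rightarrow> real)" where
  "dev0 \<sigma>1 \<pi> x a \<pi>' x' = (\<lambda>k. case k of
      [] \<Rightarrow> (\<lambda>y0. if y0 = x then (\<lambda>a1. if a1 = a then 1 else 0) else \<sigma>1 \<pi> y0)
    | e # rest \<Rightarrow> (if fst e = x \<and> fst (snd e) = a then \<sigma>1 (\<pi>' @ (x', a, snd (snd e)) # rest) else \<sigma>1 (\<pi> @ k)))"

definition devg :: "(('y0 \<times> 'a1 \<times> 'y1) list \<Rightarrow> 'y0 \<Rightarrow> 'a1 \<Rightarrow> real) \<Rightarrow> ('y0 \<times> 'a1 \<times> 'y1) list \<Rightarrow> 'y0 \<Rightarrow> 'a1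
   \<Rightarrow> ('y0 \<times> 'a1 \<times> 'y1) list \<Rightarrow> 'y0 \<Rightarrow> (('y0 \<times> 'a1 \<times> 'y1) list \<Rightarrow> 'y0 \<Rightarrow> 'a1 \<Rightarrow> real)" where
  "devg \<sigma>1 \<pi> x a \<pi>' x' = (\<lambda>k. if length \<pi> \<le> length k \<and> take (length \<pi>) k = \<pi>
      then dev0 \<sigma>1 \<pi> x a \<pi>' x' (drop (length \<pi>) k) else \<sigma>1 k)"

lemma shl_devg: "shl \<pi> (devg \<sigma>1 \<pi> x a \<pi>' x') = dev0 \<sigma>1 \<pi> x a \<pi>' x'"
  by (rule ext) (simp add: devg_def shl_apply)

lemma devg_off: "(\<forall>k'. k \<noteq> \<pi> @ k') \<Longrightarrow> devg \<sigma>1 \<pi> x a \<pi>' x' k = \<sigma>1 k"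
  unfolding devg_def by (metis append_take_drop_id)

lemma dist_point: "rg_dist (\<lambda>a1. if a1 = a then 1 else (0::real))"
  by (simp add: rg_dist_def)

lemma valid1_dev0: "rg_valid1 \<sigma>1 \<Longrightarrow> rg_valid1 (dev0 \<sigma>1 \<pi> x a \<pi>' x')"
  unfolding rg_valid1_def dev0_def by (auto simp: dist_point split: list.split)

lemma valid1_devg: "rg_valid1 \<sigma>1 \<Longrightarrow> rg_valid1 (devg \<sigma>1 \<pi> x a \<pi>' x')"
  using valid1_dev0[of \<sigma>1] unfolding rg_valid1_def devg_def by auto

lemma dev0_root: "dev0 \<sigma>1 \<pi> x a \<pi>' x' [] y0 = (if y0 = x then (\<lambda>a1. if a1 = a then 1 else 0) else \<sigma>1 \<pi> y0)"
  by (simp add: dev0_def)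

lemma shl_dev0_hit: "shl [(x, a, y1)] (dev0 \<sigma>1 \<pi> x a \<pi>' x') = shl (\<pi>' @ [(x', a, y1)]) \<sigma>1"
  by (rule ext) (simp add: dev0_def shl_apply)

lemma shl_dev0_miss: "\<not> (y0 = x \<and> a1 = a) \<Longrightarrow> shl [(y0, a1, y1)] (dev0 \<sigma>1 \<pi> x a \<pi>' x') = shl (\<pi> @ [(y0, a1, y1)]) \<sigma>1"
  by (rule ext) (auto simp: dev0_def shl_apply)

lemma sum_point: "(\<Sum>a1\<in>(UNIV::'a::finite set). (if a1 = a then 1 else 0) * F a1) = (F a::real)"
proof -
  have "(\<Sum>a1\<in>UNIV. (if a1 = a then 1 else 0) * F a1) = (\<Sum>a1\<in>UNIV. if a1 = a then F a1 else 0)"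
    by (rule sum.cong) auto
  then show ?thesis by simp
qed

definition pubs :: "('y0 \<times> 'a1 \<times> 'y1) list \<Rightarrow> 'y1 list" where
  "pubs k = map (\<lambda>e. snd (snd e)) k"

lemma pub_priv: "map rg_pub h = pubs (map rg_priv h)"
  by (induction h) (auto simp: pubs_def rg_pub_def rg_priv_def split: prod.split)

context rgm begin

definition Psi where
  "Psi u1 \<delta> \<sigma>0 \<tau> \<sigma>2 y0 a1 = (\<Sum>a2\<in>UNIV. \<sigma>2 [] a2 * (\<Sum>y1\<in>UNIV. \<rho>1 a1 a2 y1 *
     ((1 - \<delta>) * u1 y0 a1 a2 + \<delta> * rg_U1 \<rho>0 \<rho>1 u1 \<delta> (shl [y1] \<sigma>0) (shl [(y0, a1, y1)] \<tau>) (shl [y1] \<sigma>2))))"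

lemma U1_root:
  assumes v: "valid3 \<sigma>0 \<tau> \<sigma>2" and d: "0 \<le> \<delta>" "\<delta> < 1"
  shows "rg_U1 \<rho>0 \<rho>1 u1 \<delta> \<sigma>0 \<tau> \<sigma>2 =
    (\<Sum>a0\<in>UNIV. \<sigma>0 [] a0 * (\<Sum>y0\<in>UNIV. \<rho>0 a0 y0 * (\<Sum>a1\<in>UNIV. \<tau> [] y0 a1 * Psi u1 \<delta> \<sigma>0 \<tau> \<sigma>2 y0 a1)))"
proof -
  have "rg_U1 \<rho>0 \<rho>1 u1 \<delta> \<sigma>0 \<tau> \<sigma>2 = (\<Sum>r\<in>UNIV. rg_step \<rho>0 \<rho>1 \<sigma>0 \<tau> \<sigma>2 [] r *
     ((1 - \<delta>) * fu1 u1 r + \<delta> * rg_U1 \<rho>0 \<rho>1 u1 \<delta> (shl [rg_pub r] \<sigma>0) (shl [rg_priv r] \<tau>) (shl [rg_pub r] \<sigma>2)))"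
    by (simp add: U1_rec[OF v d] sum_distrib_left distrib_left sum.distrib mult_ac)
  also have "\<dots> = (\<Sum>a0\<in>UNIV. \<Sum>y0\<in>UNIV. \<Sum>a1\<in>UNIV. \<Sum>a2\<in>UNIV. \<Sum>y1\<in>UNIV.
      \<sigma>0 [] a0 * \<rho>0 a0 y0 * \<tau> [] y0 a1 * \<sigma>2 [] a2 * \<rho>1 a1 a2 y1 *
      ((1 - \<delta>) * u1 y0 a1 a2 + \<delta> * rg_U1 \<rho>0 \<rho>1 u1 \<delta> (shl [y1] \<sigma>0) (shl [(y0, a1, y1)] \<tau>) (shl [y1] \<sigma>2)))"
    by (simp add: step_expand fu1_def rg_pub_def rg_priv_def)
  also have "\<dots> = (\<Sum>a0\<in>UNIV. \<sigma>0 [] a0 * (\<Sum>y0\<in>UNIV. \<rho>0 a0 y0 * (\<Sum>a1\<in>UNIV. \<tau> [] y0 a1 * Psi u1 \<delta> \<sigma>0 \<tau> \<sigma>2 y0 a1)))"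
    by (simp add: Psi_def sum_distrib_left mult_ac)
  finally show ?thesis .
qed

definition Lam where
  "Lam u1 \<delta> \<sigma>0 \<sigma>1 \<sigma>2 q y0 a1 k y0' = (\<Sum>a2\<in>UNIV. \<sigma>2 q a2 * (\<Sum>y1\<in>UNIV. \<rho>1 a1 a2 y1 *
     ((1 - \<delta>) * u1 y0 a1 a2 + \<delta> * rg_U1 \<rho>0 \<rho>1 u1 \<delta> (shl (q @ [y1]) \<sigma>0) (shl (k @ [(y0', a1, y1)]) \<sigma>1) (shl (q @ [y1]) \<sigma>2))))"

lemma Psi_orig: "Psi u1 \<delta> (shl q \<sigma>0) (shl \<pi> \<sigma>1) (shl q \<sigma>2) y0 a1 = Lam u1 \<delta> \<sigma>0 \<sigma>1 \<sigma>2 q y0 a1 \<pi> y0"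
  by (simp add: Psi_def Lam_def shl_apply)

lemma Psi_dev_miss: "\<not> (y0 = x \<and> a1 = a) \<Longrightarrow>
  Psi u1 \<delta> (shl q \<sigma>0) (dev0 \<sigma>1 \<pi> x a \<pi>' x') (shl q \<sigma>2) y0 a1 = Lam u1 \<delta> \<sigma>0 \<sigma>1 \<sigma>2 q y0 a1 \<pi> y0"
  by (simp add: Psi_def Lam_def shl_apply shl_dev0_miss)

lemma Psi_dev_hit:
  "Psi u1 \<delta> (shl q \<sigma>0) (dev0 \<sigma>1 \<pi> x a \<pi>' x') (shl q \<sigma>2) x a = Lam u1 \<delta> \<sigma>0 \<sigma>1 \<sigma>2 q x a \<pi>' x'"
  by (simp add: Psi_def Lam_def shl_apply shl_dev0_hit)

lemma dev_root_diff:
  assumes v: "valid3 \<sigma>0 \<sigma>1 \<sigma>2" and d: "0 \<le> \<delta>" "\<delta> < 1"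
  shows "rg_U1 \<rho>0 \<rho>1 u1 \<delta> (shl q \<sigma>0) (dev0 \<sigma>1 \<pi> x a \<pi>' x') (shl q \<sigma>2) -
         rg_U1 \<rho>0 \<rho>1 u1 \<delta> (shl q \<sigma>0) (shl \<pi> \<sigma>1) (shl q \<sigma>2) =
    (\<Sum>a0\<in>UNIV. \<sigma>0 q a0 * \<rho>0 a0 x) *
    (Lam u1 \<delta> \<sigma>0 \<sigma>1 \<sigma>2 q x a \<pi>' x' - (\<Sum>a1\<in>UNIV. \<sigma>1 \<pi> x a1 * Lam u1 \<delta> \<sigma>0 \<sigma>1 \<sigma>2 q x a1 \<pi> x))"
proof -
  have v1: "valid3 (shl q \<sigma>0) (dev0 \<sigma>1 \<pi> x a \<pi>' x') (shl q \<sigma>2)"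
    using v valid1_dev0[of \<sigma>1] by (auto simp: valid3_def rg_valid_pub_def shl_apply)
  have v2: "valid3 (shl q \<sigma>0) (shl \<pi> \<sigma>1) (shl q \<sigma>2)" by (rule valid3_shl[OF v])
  have inner: "(\<Sum>a1\<in>UNIV. dev0 \<sigma>1 \<pi> x a \<pi>' x' [] y0 a1 * Psi u1 \<delta> (shl q \<sigma>0) (dev0 \<sigma>1 \<pi> x a \<pi>' x') (shl q \<sigma>2) y0 a1)
     - (\<Sum>a1\<in>UNIV. shl \<pi> \<sigma>1 [] y0 a1 * Psi u1 \<delta> (shl q \<sigma>0) (shl \<pi> \<sigma>1) (shl q \<sigma>2) y0 a1)
     = (if y0 = x then Lam u1 \<delta> \<sigma>0 \<sigma>1 \<sigma>2 q x a \<pi>' x' - (\<Sum>a1\<in>UNIV. \<sigma>1 \<pi> x a1 * Lam u1 \<delta> \<sigma>0 \<sigma>1 \<sigma>2 q x a1 \<pi> x) else 0)" for y0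
  proof (cases "y0 = x")
    case True
    have "(\<Sum>a1\<in>UNIV. dev0 \<sigma>1 \<pi> x a \<pi>' x' [] y0 a1 * Psi u1 \<delta> (shl q \<sigma>0) (dev0 \<sigma>1 \<pi> x a \<pi>' x') (shl q \<sigma>2) y0 a1)
        = Lam u1 \<delta> \<sigma>0 \<sigma>1 \<sigma>2 q x a \<pi>' x'"
      using True by (simp add: dev0_root Psi_dev_hit sum_point)
    then show ?thesis using True by (simp add: shl_apply Psi_orig)
  next
    case False
    then show ?thesis by (simp add: dev0_root Psi_dev_miss Psi_orig shl_apply)
  qed
  define S1 where "S1 = (\<lambda>y0. \<Sum>a1\<in>UNIV. dev0 \<sigma>1 \<pi> x a \<pi>' x' [] y0 a1 * Psi u1 \<delta> (shl q \<sigma>0) (dev0 \<sigma>1 \<pi> x a \<pi>' x') (shl q \<sigma>2) y0 a1)"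
  define S2 where "S2 = (\<lambda>y0. \<Sum>a1\<in>UNIV. shl \<pi> \<sigma>1 [] y0 a1 * Psi u1 \<delta> (shl q \<sigma>0) (shl \<pi> \<sigma>1) (shl q \<sigma>2) y0 a1)"
  define L where "L = Lam u1 \<delta> \<sigma>0 \<sigma>1 \<sigma>2 q x a \<pi>' x' - (\<Sum>a1\<in>UNIV. \<sigma>1 \<pi> x a1 * Lam u1 \<delta> \<sigma>0 \<sigma>1 \<sigma>2 q x a1 \<pi> x)"
  have "rg_U1 \<rho>0 \<rho>1 u1 \<delta> (shl q \<sigma>0) (dev0 \<sigma>1 \<pi> x a \<pi>' x') (shl q \<sigma>2) -
         rg_U1 \<rho>0 \<rho>1 u1 \<delta> (shl q \<sigma>0) (shl \<pi> \<sigma>1) (shl q \<sigma>2) =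
     (\<Sum>a0\<in>UNIV. shl q \<sigma>0 [] a0 * (\<Sum>y0\<in>UNIV. \<rho>0 a0 y0 * S1 y0)) - (\<Sum>a0\<in>UNIV. shl q \<sigma>0 [] a0 * (\<Sum>y0\<in>UNIV. \<rho>0 a0 y0 * S2 y0))"
    unfolding U1_root[OF v1 d] U1_root[OF v2 d] S1_def S2_def by (rule refl)
  also have "\<dots> = (\<Sum>a0\<in>UNIV. \<sigma>0 q a0 * (\<Sum>y0\<in>UNIV. \<rho>0 a0 y0 * (S1 y0 - S2 y0)))"
    by (simp add: shl_apply sum_subtractf[symmetric] right_diff_distrib[symmetric])
  also have "\<dots> = (\<Sum>a0\<in>UNIV. \<sigma>0 q a0 * (\<Sum>y0\<in>UNIV. \<rho>0 a0 y0 * (if y0 = x then L else 0)))"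
    using inner unfolding S1_def S2_def L_def by simp
  also have "\<dots> = (\<Sum>a0\<in>UNIV. \<sigma>0 q a0 * \<rho>0 a0 x) * L"
    by (simp add: if_distrib sum_distrib_right sum_distrib_left mult_ac cong: if_cong)
  finally show ?thesis unfolding L_def .
qed

end


lemma dist_pos_ex: "rg_dist p \<Longrightarrow> \<exists>a. 0 < (p :: 'a::finite \<Rightarrow> real) a"
proof (rule ccontr)
  assume d: "rg_dist p" and "\<not> (\<exists>a. 0 < p a)"
  then have "\<forall>a. p a \<le> 0" by (auto simp: not_less)
  then have "sum p UNIV \<le> 0" by (intro sum_nonpos) auto
  with d show False by (simp add: rg_dist_def)
qed

context rgm begin

lemma IC:
  assumes v: "valid3 \<sigma>0 \<sigma>1 \<sigma>2" and d: "0 < \<delta>" "\<delta> < 1"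
    and opt: "\<And>\<sigma>1'. rg_valid1 \<sigma>1' \<Longrightarrow> rg_U1 \<rho>0 \<rho>1 u1 \<delta> \<sigma>0 \<sigma>1' \<sigma>2 \<le> rg_U1 \<rho>0 \<rho>1 u1 \<delta> \<sigma>0 \<sigma>1 \<sigma>2"
    and full: "\<And>a0 y0. 0 < \<rho>0 a0 y0"
    and h0: "map rg_priv h0 = \<pi>" "0 < rg_hist_prob \<rho>0 \<rho>1 \<sigma>0 \<sigma>1 \<sigma>2 h0"
  shows "Lam u1 \<delta> \<sigma>0 \<sigma>1 \<sigma>2 (pubs \<pi>) x a \<pi>' x' \<le> (\<Sum>a1\<in>UNIV. \<sigma>1 \<pi> x a1 * Lam u1 \<delta> \<sigma>0 \<sigma>1 \<sigma>2 (pubs \<pi>) x a1 \<pi> x)"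
proof -
  define \<tau>' where "\<tau>' = devg \<sigma>1 \<pi> x a \<pi>' x'"
  define q where "q = pubs \<pi>"
  have v1: "rg_valid1 \<sigma>1" using v by (simp add: valid3_def)
  have v': "valid3 \<sigma>0 \<tau>' \<sigma>2" using v valid1_devg[OF v1] by (simp add: valid3_def \<tau>'_def)
  define \<Delta> where "\<Delta> = rg_U1 \<rho>0 \<rho>1 u1 \<delta> (shl q \<sigma>0) (dev0 \<sigma>1 \<pi> x a \<pi>' x') (shl q \<sigma>2) -
         rg_U1 \<rho>0 \<rho>1 u1 \<delta> (shl q \<sigma>0) (shl \<pi> \<sigma>1) (shl q \<sigma>2)"
  define W where "W = (\<Sum>h\<in>{h. length h = length \<pi>}. if map rg_priv h = \<pi> then rg_hist_prob \<rho>0 \<rho>1 \<sigma>0 \<sigma>1 \<sigma>2 h else 0)"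
  have "rg_U1 \<rho>0 \<rho>1 u1 \<delta> \<sigma>0 \<tau>' \<sigma>2 - rg_U1 \<rho>0 \<rho>1 u1 \<delta> \<sigma>0 \<sigma>1 \<sigma>2 =
    \<delta> ^ length \<pi> * (\<Sum>h\<in>{h. length h = length \<pi>}. if map rg_priv h = \<pi> then
       rg_hist_prob \<rho>0 \<rho>1 \<sigma>0 \<sigma>1 \<sigma>2 h *
       (rg_U1 \<rho>0 \<rho>1 u1 \<delta> (shl (map rg_pub h) \<sigma>0) (shl (map rg_priv h) \<tau>') (shl (map rg_pub h) \<sigma>2) -
        rg_U1 \<rho>0 \<rho>1 u1 \<delta> (shl (map rg_pub h) \<sigma>0) (shl (map rg_priv h) \<sigma>1) (shl (map rg_pub h) \<sigma>2)) else 0)"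
    using d by (intro dev_decomp[OF v v']) (auto simp: \<tau>'_def devg_off)
  also have "\<dots> = \<delta> ^ length \<pi> * (\<Sum>h\<in>{h. length h = length \<pi>}. if map rg_priv h = \<pi> then
       rg_hist_prob \<rho>0 \<rho>1 \<sigma>0 \<sigma>1 \<sigma>2 h * \<Delta> else 0)"
    by (intro arg_cong[where f="\<lambda>z. \<delta> ^ length \<pi> * z"] sum.cong refl)
       (auto simp: \<Delta>_def q_def pub_priv \<tau>'_def shl_devg)
  also have "\<dots> = \<delta> ^ length \<pi> * W * \<Delta>"
    unfolding W_def mult.assoc sum_distrib_right by (intro arg_cong[where f="\<lambda>z. \<delta> ^ length \<pi> * z"] sum.cong refl) simp
  finally have eq: "rg_U1 \<rho>0 \<rho>1 u1 \<delta> \<sigma>0 \<tau>' \<sigma>2 - rg_U1 \<rho>0 \<rho>1 u1 \<delta> \<sigma>0 \<sigma>1 \<sigma>2 = \<delta> ^ length \<pi> * W * \<Delta>" .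
  have le: "rg_U1 \<rho>0 \<rho>1 u1 \<delta> \<sigma>0 \<tau>' \<sigma>2 \<le> rg_U1 \<rho>0 \<rho>1 u1 \<delta> \<sigma>0 \<sigma>1 \<sigma>2"
    using opt v' by (simp add: valid3_def)
  have Wpos: "0 < W"
  proof -
    have "(if map rg_priv h0 = \<pi> then rg_hist_prob \<rho>0 \<rho>1 \<sigma>0 \<sigma>1 \<sigma>2 h0 else 0) \<le> W"
      unfolding W_def
      by (rule member_le_sum) (use h0 hp_nonneg[OF v] in \<open>auto simp: finite_list_length\<close>)
    then show ?thesis using h0 by simp
  qed
  have "\<delta> ^ length \<pi> * W * \<Delta> \<le> 0" using eq le by simp
  moreover have "0 < \<delta> ^ length \<pi> * W" using d Wpos by simp
  ultimately have D0: "\<Delta> \<le> 0" using mult_le_cancel_left_pos[of "\<delta> ^ length \<pi> * W" \<Delta> 0] by simp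
  obtain b where b: "0 < \<sigma>0 q b" using dist_pos_ex valid3D(1)[OF v] by blast
  have gpos: "0 < (\<Sum>a0\<in>UNIV. \<sigma>0 q a0 * \<rho>0 a0 x)"
  proof (rule sum_pos2[of UNIV b])
    show "0 < \<sigma>0 q b * \<rho>0 b x" using b full by simp
    fix i show "0 \<le> \<sigma>0 q i * \<rho>0 i x" using valid3_nn(1)[OF v, of q i] full[of i x] by simp
  qed auto
  have "\<Delta> = (\<Sum>a0\<in>UNIV. \<sigma>0 q a0 * \<rho>0 a0 x) *
    (Lam u1 \<delta> \<sigma>0 \<sigma>1 \<sigma>2 q x a \<pi>' x' - (\<Sum>a1\<in>UNIV. \<sigma>1 \<pi> x a1 * Lam u1 \<delta> \<sigma>0 \<sigma>1 \<sigma>2 q x a1 \<pi> x))"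
    unfolding \<Delta>_def using d by (intro dev_root_diff[OF v]) auto
  with D0 gpos show ?thesis by (simp add: q_def mult_le_0_iff)
qed

end


lemma sum_group_pub:
  fixes F :: "('a0 \<times> 'y0 \<times> 'a1 \<times> 'a2 \<times> 'y1) list \<Rightarrow> real"
  assumes "finite {h::('a0 \<times> 'y0 \<times> 'a1 \<times> 'a2 \<times> 'y1) list. length h = T}" "finite {p::'y1 list. length p = T}"
  shows "(\<Sum>h\<in>{h. length h = T}. F h) =
    (\<Sum>p\<in>{p. length p = T}. \<Sum>h\<in>{h. length h = T}. if map rg_pub h = p then F h else 0)"
proof -
  have "(\<Sum>p\<in>{p. length p = T}. \<Sum>h\<in>{h. length h = T}. if map rg_pub h = p then F h else 0) =
      (\<Sum>h\<in>{h. length h = T}. \<Sum>p\<in>{p. length p = T}. if map rg_pub h = p then F h else 0)"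
    by (rule sum.swap)
  also have "\<dots> = (\<Sum>h\<in>{h. length h = T}. F h)"
    by (rule sum.cong) (use assms in \<open>auto simp: sum.delta\<close>)
  finally show ?thesis by simp
qed

lemma sum_shift_mod:
  fixes f :: "nat \<Rightarrow> real"
  assumes "1 \<le> N"
  shows "(\<Sum>i<N. f (Suc i mod N)) = (\<Sum>i<N. f i)"
proof -
  obtain M where N: "N = Suc M" using assms by (cases N) auto
  have "(\<Sum>i<Suc M. f (Suc i mod Suc M)) = (\<Sum>i<M. f (Suc i mod Suc M)) + f (Suc M mod Suc M)"
    by simp
  also have "(\<Sum>i<M. f (Suc i mod Suc M)) = (\<Sum>i<M. f (Suc i))"
    by (rule sum.cong) auto
  also have "(\<Sum>i<M. f (Suc i)) + f (Suc M mod Suc M) = (\<Sum>i<Suc M. f i)"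
    by (subst sum.lessThan_Suc_shift) simp
  finally show ?thesis using N by simp
qed

lemma avg_ge:
  fixes w f :: "'a::finite \<Rightarrow> real"
  assumes d: "rg_dist w" and le: "\<And>a. f a \<le> (\<Sum>a'\<in>UNIV. w a' * f a')" and b: "0 < w b"
  shows "(\<Sum>a'\<in>UNIV. w a' * f a') \<le> f b"
proof (rule ccontr)
  let ?A = "\<Sum>a'\<in>UNIV. w a' * f a'"
  assume "\<not> ?A \<le> f b"
  then have lt: "f b < ?A" by simp
  have "(\<Sum>a'\<in>UNIV. w a' * f a') < (\<Sum>a'\<in>UNIV. w a' * ?A)"
  proof (rule sum_strict_mono_ex1)
    show "\<forall>x\<in>UNIV. w x * f x \<le> w x * ?A" using le d by (auto intro: mult_left_mono simp: rg_dist_def)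
    show "\<exists>a\<in>UNIV. w a * f a < w a * ?A" using lt b by (intro bexI[of _ b]) (auto simp: mult_strict_left_mono)
  qed auto
  also have "\<dots> = ?A" using d by (simp add: sum_distrib_right[symmetric] rg_dist_def)
  finally show False by simp
qed

definition Est :: "('a0::finite \<Rightarrow> 'y0::finite \<Rightarrow> real) \<Rightarrow> ('a0 \<Rightarrow> 'y0 \<Rightarrow> 'a1::finite \<Rightarrow> 'a2::finite \<Rightarrow> real)
   \<Rightarrow> ('a0 \<Rightarrow> real) \<Rightarrow> ('y0 \<Rightarrow> 'a1 \<Rightarrow> real) \<Rightarrow> ('a2 \<Rightarrow> real) \<Rightarrow> real" where
  "Est \<rho>0 G \<alpha>0 s \<alpha>2 = (\<Sum>a0\<in>UNIV. \<alpha>0 a0 * (\<Sum>y0\<in>UNIV. \<rho>0 a0 y0 * (\<Sum>a1\<in>UNIV. s y0 a1 *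
       (\<Sum>a2\<in>UNIV. \<alpha>2 a2 * G a0 y0 a1 a2))))"

lemma lin_swap:
  fixes f :: "'a \<Rightarrow> real"
  shows "(\<Sum>a\<in>A. f a * (\<Sum>h\<in>H. c h * g h a)) = (\<Sum>h\<in>H. c h * (\<Sum>a\<in>A. f a * g h a))"
proof -
  have "(\<Sum>a\<in>A. f a * (\<Sum>h\<in>H. c h * g h a)) = (\<Sum>a\<in>A. \<Sum>h\<in>H. c h * (f a * g h a))"
    by (simp add: sum_distrib_left mult.left_commute)
  also have "\<dots> = (\<Sum>h\<in>H. \<Sum>a\<in>A. c h * (f a * g h a))" by (rule sum.swap)
  also have "\<dots> = (\<Sum>h\<in>H. c h * (\<Sum>a\<in>A. f a * g h a))" by (simp add: sum_distrib_left)
  finally show ?thesis .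
qed

lemma lin_swap_r:
  fixes f :: "'a \<Rightarrow> real"
  shows "(\<Sum>a\<in>A. (\<Sum>h\<in>H. c h * g h a) * f a) = (\<Sum>h\<in>H. c h * (\<Sum>a\<in>A. g h a * f a))"
proof -
  have "(\<Sum>a\<in>A. (\<Sum>h\<in>H. c h * g h a) * f a) = (\<Sum>a\<in>A. \<Sum>h\<in>H. c h * (g h a * f a))"
    by (simp add: sum_distrib_right mult.assoc)
  also have "\<dots> = (\<Sum>h\<in>H. \<Sum>a\<in>A. c h * (g h a * f a))" by (rule sum.swap)
  also have "\<dots> = (\<Sum>h\<in>H. c h * (\<Sum>a\<in>A. g h a * f a))" by (simp add: sum_distrib_left)
  finally show ?thesis .
qed

lemma Est_lin:
  assumes "finite H"
  shows "Est \<rho>0 G \<alpha>0 (\<lambda>y0 a1. \<Sum>h\<in>H. c h * S h y0 a1) \<alpha>2 = (\<Sum>h\<in>H. c h * Est \<rho>0 G \<alpha>0 (S h) \<alpha>2)"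
  using assms
proof (induction H rule: finite_induct)
  case empty then show ?case by (simp add: Est_def)
next
  case (insert x H)
  have "Est \<rho>0 G \<alpha>0 (\<lambda>y0 a1. \<Sum>h\<in>insert x H. c h * S h y0 a1) \<alpha>2 =
        Est \<rho>0 G \<alpha>0 (\<lambda>y0 a1. c x * S x y0 a1 + (\<Sum>h\<in>H. c h * S h y0 a1)) \<alpha>2"
    using insert by simp
  also have "\<dots> = c x * Est \<rho>0 G \<alpha>0 (S x) \<alpha>2 + Est \<rho>0 G \<alpha>0 (\<lambda>y0 a1. \<Sum>h\<in>H. c h * S h y0 a1) \<alpha>2"
    unfolding Est_def by (simp add: distrib_right distrib_left sum.distrib sum_distrib_left mult_ac)
  finally show ?case using insert by simp
qed

lemma Est_u1: "Est \<rho>0 (\<lambda>a0 y0 a1 a2. u1 y0 a1 a2) \<alpha>0 s \<alpha>2 = rg_u1_stage \<rho>0 u1 \<alpha>0 s \<alpha>2"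
  by (simp add: Est_def rg_u1_stage_def)

lemma Est_u0: "rg_dist \<alpha>2 \<Longrightarrow> Est \<rho>0 (\<lambda>a0 y0 a1 a2. u0 a0 a1) \<alpha>0 s \<alpha>2 = (\<Sum>a0\<in>UNIV. \<alpha>0 a0 * rg_u0_s1 \<rho>0 u0 s a0)"
  by (simp add: Est_def rg_u0_s1_def sum_distrib_right[symmetric] rg_dist_def)

lemma Est_u2: "Est \<rho>0 (\<lambda>a0 y0 a1 a2. u2 y0 a1 a2) \<alpha>0 s \<alpha>2 = (\<Sum>a2\<in>UNIV. \<alpha>2 a2 * rg_u2_s1 \<rho>0 u2 \<alpha>0 s a2)"
proof -
  have e1: "\<And>y0. (\<Sum>a1\<in>UNIV. s y0 a1 * (\<Sum>a2\<in>UNIV. \<alpha>2 a2 * u2 y0 a1 a2)) = (\<Sum>a2\<in>UNIV. \<alpha>2 a2 * (\<Sum>a1\<in>UNIV. s y0 a1 * u2 y0 a1 a2))"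
    by (rule lin_swap)
  have e2: "\<And>a0. (\<Sum>y0\<in>UNIV. \<rho>0 a0 y0 * (\<Sum>a2\<in>UNIV. \<alpha>2 a2 * (\<Sum>a1\<in>UNIV. s y0 a1 * u2 y0 a1 a2))) =
     (\<Sum>a2\<in>UNIV. \<alpha>2 a2 * (\<Sum>y0\<in>UNIV. \<rho>0 a0 y0 * (\<Sum>a1\<in>UNIV. s y0 a1 * u2 y0 a1 a2)))"
    by (rule lin_swap)
  have e3: "(\<Sum>a0\<in>UNIV. \<alpha>0 a0 * (\<Sum>a2\<in>UNIV. \<alpha>2 a2 * (\<Sum>y0\<in>UNIV. \<rho>0 a0 y0 * (\<Sum>a1\<in>UNIV. s y0 a1 * u2 y0 a1 a2)))) =
     (\<Sum>a2\<in>UNIV. \<alpha>2 a2 * (\<Sum>a0\<in>UNIV. \<alpha>0 a0 * (\<Sum>y0\<in>UNIV. \<rho>0 a0 y0 * (\<Sum>a1\<in>UNIV. s y0 a1 * u2 y0 a1 a2))))"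
    by (rule lin_swap)
  show ?thesis unfolding Est_def rg_u2_s1_def by (simp only: e1 e2 e3)
qed

definition NR where
  "NR \<rho>0 \<rho>1 \<sigma>0 \<tau> \<sigma>2 T p = (\<lambda>y0 a1. \<Sum>h\<in>{h. length h = T}.
      (if map rg_pub h = p then rg_hist_prob \<rho>0 \<rho>1 \<sigma>0 \<tau> \<sigma>2 h else 0) * \<tau> (map rg_priv h) y0 a1)"

definition PR where
  "PR \<rho>0 \<rho>1 \<sigma>0 \<tau> \<sigma>2 T p = (\<Sum>h\<in>{h. length h = T}.
      (if map rg_pub h = p then rg_hist_prob \<rho>0 \<rho>1 \<sigma>0 \<tau> \<sigma>2 h else 0))"

context rgm begin

lemma exp_decomp:
  "rg_exp_stage \<rho>0 \<rho>1 \<sigma>0 \<tau> \<sigma>2 T (\<lambda>(a0, y0, a1, a2, y1). G a0 y0 a1 a2) =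
   (\<Sum>p\<in>{p. length p = T}. Est \<rho>0 G (\<sigma>0 p) (NR \<rho>0 \<rho>1 \<sigma>0 \<tau> \<sigma>2 T p) (\<sigma>2 p))"
proof -
  have "rg_exp_stage \<rho>0 \<rho>1 \<sigma>0 \<tau> \<sigma>2 T (\<lambda>(a0, y0, a1, a2, y1). G a0 y0 a1 a2) =
     (\<Sum>h\<in>{h. length h = T}. rg_hist_prob \<rho>0 \<rho>1 \<sigma>0 \<tau> \<sigma>2 h *
        Est \<rho>0 G (\<sigma>0 (map rg_pub h)) (\<tau> (map rg_priv h)) (\<sigma>2 (map rg_pub h)))"
    unfolding exp_snoc step_expand_noy1 Est_def by (rule refl)
  also have "\<dots> = (\<Sum>p\<in>{p. length p = T}. \<Sum>h\<in>{h. length h = T}. if map rg_pub h = p then rg_hist_prob \<rho>0 \<rho>1 \<sigma>0 \<tau> \<sigma>2 h *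
        Est \<rho>0 G (\<sigma>0 (map rg_pub h)) (\<tau> (map rg_priv h)) (\<sigma>2 (map rg_pub h)) else 0)"
    by (rule sum_group_pub) (auto simp: finite_list_length)
  also have "\<dots> = (\<Sum>p\<in>{p. length p = T}. \<Sum>h\<in>{h. length h = T}.
        (if map rg_pub h = p then rg_hist_prob \<rho>0 \<rho>1 \<sigma>0 \<tau> \<sigma>2 h else 0) * Est \<rho>0 G (\<sigma>0 p) (\<tau> (map rg_priv h)) (\<sigma>2 p))"
    by (intro sum.cong refl) auto
  also have "\<dots> = (\<Sum>p\<in>{p. length p = T}. Est \<rho>0 G (\<sigma>0 p) (NR \<rho>0 \<rho>1 \<sigma>0 \<tau> \<sigma>2 T p) (\<sigma>2 p))"
    unfolding NR_def by (intro sum.cong refl) (simp add: Est_lin finite_list_length)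
  finally show ?thesis .
qed

lemma NR_nonneg: "valid3 \<sigma>0 \<tau> \<sigma>2 \<Longrightarrow> 0 \<le> NR \<rho>0 \<rho>1 \<sigma>0 \<tau> \<sigma>2 T p y0 a1"
  unfolding NR_def by (intro sum_nonneg mult_nonneg_nonneg) (auto simp: hp_nonneg valid3_nn)

lemma PR_nonneg: "valid3 \<sigma>0 \<tau> \<sigma>2 \<Longrightarrow> 0 \<le> PR \<rho>0 \<rho>1 \<sigma>0 \<tau> \<sigma>2 T p"
  unfolding PR_def by (intro sum_nonneg) (auto simp: hp_nonneg)

lemma NR_sum: "valid3 \<sigma>0 \<tau> \<sigma>2 \<Longrightarrow> (\<Sum>a1\<in>UNIV. NR \<rho>0 \<rho>1 \<sigma>0 \<tau> \<sigma>2 T p y0 a1) = PR \<rho>0 \<rho>1 \<sigma>0 \<tau> \<sigma>2 T p"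
proof -
  assume v: "valid3 \<sigma>0 \<tau> \<sigma>2"
  define c where "c = (\<lambda>h. if map rg_pub h = p then rg_hist_prob \<rho>0 \<rho>1 \<sigma>0 \<tau> \<sigma>2 h else 0)"
  have "(\<Sum>a1\<in>UNIV. \<Sum>h\<in>{h. length h = T}. c h * \<tau> (map rg_priv h) y0 a1) = (\<Sum>h\<in>{h. length h = T}. \<Sum>a1\<in>UNIV. c h * \<tau> (map rg_priv h) y0 a1)"
    by (rule sum.swap)
  also have "\<dots> = (\<Sum>h\<in>{h. length h = T}. c h * (\<Sum>a1\<in>UNIV. \<tau> (map rg_priv h) y0 a1))"
    by (simp add: sum_distrib_left)
  also have "\<dots> = (\<Sum>h\<in>{h. length h = T}. c h)"
    using dist_sum1[OF valid3D(2)[OF v]] by simp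
  finally show ?thesis unfolding NR_def PR_def c_def .
qed

lemma PR_sum: "valid3 \<sigma>0 \<tau> \<sigma>2 \<Longrightarrow> (\<Sum>p\<in>{p. length p = T}. PR \<rho>0 \<rho>1 \<sigma>0 \<tau> \<sigma>2 T p) = 1"
  unfolding PR_def using sum_group_pub[of T "rg_hist_prob \<rho>0 \<rho>1 \<sigma>0 \<tau> \<sigma>2", symmetric] hp_sum[of \<sigma>0 \<tau> \<sigma>2 T]
  by (simp add: finite_list_length)

lemma NR_pos_ex:
  assumes v: "valid3 \<sigma>0 \<tau> \<sigma>2" and pos: "0 < NR \<rho>0 \<rho>1 \<sigma>0 \<tau> \<sigma>2 T p y0 a1"
  shows "\<exists>h. length h = T \<and> map rg_pub h = p \<and> 0 < rg_hist_prob \<rho>0 \<rho>1 \<sigma>0 \<tau> \<sigma>2 h \<and> 0 < \<tau> (map rg_priv h) y0 a1"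
proof (rule ccontr)
  assume "\<not> ?thesis"
  then have "\<And>h. h \<in> {h. length h = T} \<Longrightarrow>
     (if map rg_pub h = p then rg_hist_prob \<rho>0 \<rho>1 \<sigma>0 \<tau> \<sigma>2 h else 0) * \<tau> (map rg_priv h) y0 a1 \<le> 0"
    using hp_nonneg[OF v] valid3_nn(2)[OF v] by (force simp: mult_le_0_iff not_less)
  then have "NR \<rho>0 \<rho>1 \<sigma>0 \<tau> \<sigma>2 T p y0 a1 \<le> 0" unfolding NR_def by (rule sum_nonpos)
  with pos show False by simp
qed

definition Kc where
  "Kc u1 \<delta> \<sigma>0 \<sigma>1 \<sigma>2 q a1 k y0' = (\<Sum>a2\<in>UNIV. \<sigma>2 q a2 * (\<Sum>y1\<in>UNIV. \<rho>1 a1 a2 y1 *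
      rg_U1 \<rho>0 \<rho>1 u1 \<delta> (shl (q @ [y1]) \<sigma>0) (shl (k @ [(y0', a1, y1)]) \<sigma>1) (shl (q @ [y1]) \<sigma>2)))"

lemma Lam_split: "Lam u1 \<delta> \<sigma>0 \<sigma>1 \<sigma>2 q y0 a1 k y0' =
   (1 - \<delta>) * rg_u1_at u1 (\<sigma>2 q) y0 a1 + \<delta> * Kc u1 \<delta> \<sigma>0 \<sigma>1 \<sigma>2 q a1 k y0'"
proof -
  have "\<And>a2. (\<Sum>y1\<in>UNIV. \<rho>1 a1 a2 y1 * ((1 - \<delta>) * u1 y0 a1 a2)) = (1 - \<delta>) * u1 y0 a1 a2"
    by (simp add: sum_distrib_right[symmetric])
  then show ?thesis
    unfolding Lam_def Kc_def rg_u1_at_def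
    by (simp add: distrib_left sum.distrib sum_distrib_left mult_ac)
qed

lemma CM_at:
  assumes v: "valid3 \<sigma>0 \<sigma>1 \<sigma>2" and d: "0 < \<delta>" "\<delta> < 1"
    and opt: "\<And>\<sigma>1'. rg_valid1 \<sigma>1' \<Longrightarrow> rg_U1 \<rho>0 \<rho>1 u1 \<delta> \<sigma>0 \<sigma>1' \<sigma>2 \<le> rg_U1 \<rho>0 \<rho>1 u1 \<delta> \<sigma>0 \<sigma>1 \<sigma>2"
    and full: "\<And>a0 y0. 0 < \<rho>0 a0 y0"
  shows "rg_cyc_mono (rg_u1_at u1 (\<sigma>2 p)) (rg_supp1 (NR \<rho>0 \<rho>1 \<sigma>0 \<sigma>1 \<sigma>2 T p))"
  unfolding rg_cyc_mono_def
proof (intro allI impI)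
  fix N :: nat and x :: "nat \<Rightarrow> 'y0" and y :: "nat \<Rightarrow> 'a1"
  assume a: "1 \<le> N \<and> (\<forall>i<N. (x i, y i) \<in> rg_supp1 (NR \<rho>0 \<rho>1 \<sigma>0 \<sigma>1 \<sigma>2 T p))"
  have "\<forall>i. \<exists>h. i < N \<longrightarrow> length h = T \<and> map rg_pub h = p \<and> 0 < rg_hist_prob \<rho>0 \<rho>1 \<sigma>0 \<sigma>1 \<sigma>2 h \<and> 0 < \<sigma>1 (map rg_priv h) (x i) (y i)"
    using a NR_pos_ex[OF v] by (auto simp: rg_supp1_def)
  then obtain H where H: "\<And>i. i < N \<Longrightarrow> length (H i) = T \<and> map rg_pub (H i) = p \<and> 0 < rg_hist_prob \<rho>0 \<rho>1 \<sigma>0 \<sigma>1 \<sigma>2 (H i) \<and> 0 < \<sigma>1 (map rg_priv (H i)) (x i) (y i)"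
    by metis
  define \<pi> where "\<pi> = (\<lambda>i. map rg_priv (H i))"
  have pp: "pubs (\<pi> i) = p" if "i < N" for i using H[OF that] by (simp add: \<pi>_def pub_priv[symmetric])
  define ub where "ub = rg_u1_at u1 (\<sigma>2 p)"
  define K where "K = (\<lambda>i. Kc u1 \<delta> \<sigma>0 \<sigma>1 \<sigma>2 p (y i) (\<pi> i) (x i))"
  have step: "(1 - \<delta>) * ub (x i) (y (Suc i mod N)) + \<delta> * K (Suc i mod N) \<le> (1 - \<delta>) * ub (x i) (y i) + \<delta> * K i"
    if i: "i < N" for i
  proof -
    define j where "j = Suc i mod N"
    have j: "j < N" using a by (simp add: j_def)
    have ic: "\<And>a' \<pi>' x'. Lam u1 \<delta> \<sigma>0 \<sigma>1 \<sigma>2 p (x i) a' \<pi>' x' \<le> (\<Sum>a1\<in>UNIV. \<sigma>1 (\<pi> i) (x i) a1 * Lam u1 \<delta> \<sigma>0 \<sigma>1 \<sigma>2 p (x i) a1 (\<pi> i) (x i))"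
      using IC[OF v d opt full, of "H i" "\<pi> i"] H[OF i] pp[OF i] by (simp add: \<pi>_def)
    have a2: "(\<Sum>a1\<in>UNIV. \<sigma>1 (\<pi> i) (x i) a1 * Lam u1 \<delta> \<sigma>0 \<sigma>1 \<sigma>2 p (x i) a1 (\<pi> i) (x i)) \<le> Lam u1 \<delta> \<sigma>0 \<sigma>1 \<sigma>2 p (x i) (y i) (\<pi> i) (x i)"
      by (rule avg_ge[OF valid3D(2)[OF v] ic]) (use H[OF i] in \<open>simp add: \<pi>_def\<close>)
    have "Lam u1 \<delta> \<sigma>0 \<sigma>1 \<sigma>2 p (x i) (y j) (\<pi> j) (x j) \<le> Lam u1 \<delta> \<sigma>0 \<sigma>1 \<sigma>2 p (x i) (y i) (\<pi> i) (x i)"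
      by (rule order.trans[OF ic a2])
    then show ?thesis by (simp add: Lam_split ub_def K_def j_def)
  qed
  have "(\<Sum>i<N. (1 - \<delta>) * ub (x i) (y (Suc i mod N)) + \<delta> * K (Suc i mod N)) \<le> (\<Sum>i<N. (1 - \<delta>) * ub (x i) (y i) + \<delta> * K i)"
    by (rule sum_mono) (use step in auto)
  moreover have "(\<Sum>i<N. K (Suc i mod N)) = (\<Sum>i<N. K i)" using a by (intro sum_shift_mod) auto
  ultimately have "(1 - \<delta>) * (\<Sum>i<N. ub (x i) (y (Suc i mod N))) \<le> (1 - \<delta>) * (\<Sum>i<N. ub (x i) (y i))"
    by (simp add: sum.distrib sum_distrib_left[symmetric])
  then show "(\<Sum>i<N. rg_u1_at u1 (\<sigma>2 p) (x i) (y (Suc i mod N))) \<le> (\<Sum>i<N. rg_u1_at u1 (\<sigma>2 p) (x i) (y i))"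
    using d by (simp add: ub_def)
qed

end


lemma dist_le1: "rg_dist (p :: 'a::finite \<Rightarrow> real) \<Longrightarrow> p a \<le> 1"
proof -
  assume d: "rg_dist p"
  have "p a \<le> sum p UNIV" by (rule member_le_sum) (use d in \<open>auto simp: rg_dist_def\<close>)
  then show ?thesis using d by (simp add: rg_dist_def)
qed

lemma dist_limit:
  assumes "\<And>n. rg_dist (P n)" "\<And>a. (\<lambda>n. P n a) \<longlonglongrightarrow> (p a :: real)"
  shows "rg_dist (p :: 'a::finite \<Rightarrow> real)"
  unfolding rg_dist_def
proof
  show "\<forall>a. 0 \<le> p a"
  proof
    fix a show "0 \<le> p a"
      by (rule LIMSEQ_le_const[OF assms(2)[of a]]) (use assms(1) in \<open>auto simp: rg_dist_def\<close>)
  qed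
  have "(\<lambda>n. sum (P n) UNIV) \<longlonglongrightarrow> sum p UNIV" by (intro tendsto_sum assms(2))
  moreover have "(\<lambda>n. sum (P n) UNIV) = (\<lambda>n. 1)" using assms(1) by (simp add: rg_dist_def)
  ultimately have "(\<lambda>n. 1::real) \<longlonglongrightarrow> sum p UNIV" by simp
  from LIMSEQ_unique[OF this tendsto_const] show "sum p UNIV = 1" by simp
qed

lemma cyc_mono_subset: "rg_cyc_mono u S \<Longrightarrow> S' \<subseteq> S \<Longrightarrow> rg_cyc_mono u S'"
  unfolding rg_cyc_mono_def by blast

lemma vCM_upper:
  assumes "rg_stage1 s" "rg_cm_strategy u1 s" "(\<alpha>0, \<alpha>2) \<in> rg_B \<rho>0 u0 u2 s"
  shows "ereal (rg_u1_stage \<rho>0 u1 \<alpha>0 s \<alpha>2) \<le> rg_vCM \<rho>0 u0 u1 u2"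
proof -
  have "ereal (rg_u1_stage \<rho>0 u1 \<alpha>0 s \<alpha>2) \<le> (SUP p \<in> rg_B \<rho>0 u0 u2 s. ereal (rg_u1_stage \<rho>0 u1 (fst p) s (snd p)))"
    by (rule SUP_upper2[where i="(\<alpha>0, \<alpha>2)"]) (use assms(3) in auto)
  also have "\<dots> \<le> rg_vCM \<rho>0 u0 u1 u2"
    unfolding rg_vCM_def by (rule SUP_upper) (use assms(1,2) in simp)
  finally show ?thesis .
qed

lemma compact_bound:
  fixes \<rho>0 :: "'a0::finite \<Rightarrow> 'y0::finite \<Rightarrow> real" and u0 :: "'a0 \<Rightarrow> 'a1::finite \<Rightarrow> real"
    and u1 u2 :: "'y0 \<Rightarrow> 'a1 \<Rightarrow> 'a2::finite \<Rightarrow> real"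
  assumes eps: "0 < \<epsilon>"
  shows "\<exists>\<eta>>0. \<forall>s t \<alpha>0 \<alpha>2. rg_stage1 s \<and> rg_cm_strategy u1 s \<and> (\<forall>y0 a1. \<bar>t y0 a1 - s y0 a1\<bar> \<le> \<eta>) \<and>
      (\<alpha>0, \<alpha>2) \<in> rg_B \<rho>0 u0 u2 t \<longrightarrow>
      ereal (rg_u1_stage \<rho>0 u1 \<alpha>0 s \<alpha>2) < rg_vCM \<rho>0 u0 u1 u2 + ereal \<epsilon>"
proof (rule ccontr)
  assume neg: "\<not> ?thesis"
  have "\<forall>n::nat. \<exists>s t \<alpha>0 \<alpha>2. rg_stage1 s \<and> rg_cm_strategy u1 s \<and> (\<forall>y0 a1. \<bar>t y0 a1 - s y0 a1\<bar> \<le> 1 / real (Suc n)) \<and>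
      (\<alpha>0, \<alpha>2) \<in> rg_B \<rho>0 u0 u2 t \<and> \<not> ereal (rg_u1_stage \<rho>0 u1 \<alpha>0 s \<alpha>2) < rg_vCM \<rho>0 u0 u1 u2 + ereal \<epsilon>"
  proof
    fix n :: nat
    have "0 < 1 / real (Suc n)" by simp
    then show "\<exists>s t \<alpha>0 \<alpha>2. rg_stage1 s \<and> rg_cm_strategy u1 s \<and> (\<forall>y0 a1. \<bar>t y0 a1 - s y0 a1\<bar> \<le> 1 / real (Suc n)) \<and>
      (\<alpha>0, \<alpha>2) \<in> rg_B \<rho>0 u0 u2 t \<and> \<not> ereal (rg_u1_stage \<rho>0 u1 \<alpha>0 s \<alpha>2) < rg_vCM \<rho>0 u0 u1 u2 + ereal \<epsilon>"
      using neg by blast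
  qed
  then obtain S T A0 A2 where H: "\<And>n. rg_stage1 (S n) \<and> rg_cm_strategy u1 (S n) \<and> (\<forall>y0 a1. \<bar>T n y0 a1 - S n y0 a1\<bar> \<le> 1 / real (Suc n)) \<and>
      (A0 n, A2 n) \<in> rg_B \<rho>0 u0 u2 (T n) \<and> \<not> ereal (rg_u1_stage \<rho>0 u1 (A0 n) (S n) (A2 n)) < rg_vCM \<rho>0 u0 u1 u2 + ereal \<epsilon>"
    by metis
  have dS: "rg_dist (S n y)" for n y using H[of n] by (simp add: rg_stage1_def)
  have dA0: "rg_dist (A0 n)" for n using H[of n] by (simp add: rg_B_def)
  have dA2: "rg_dist (A2 n)" for n using H[of n] by (simp add: rg_B_def)
  define F :: "nat \<Rightarrow> ('y0 \<times> 'a1) + 'a0 + 'a2 \<Rightarrow> real" where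
    "F = (\<lambda>n i. case i of Inl ya \<Rightarrow> S n (fst ya) (snd ya) | Inr (Inl a0) \<Rightarrow> A0 n a0 | Inr (Inr a2) \<Rightarrow> A2 n a2)"
  have Fb: "\<bar>F n i\<bar> \<le> 1" for n i
    using dist_le1[OF dS] dist_le1[OF dA0] dist_le1[OF dA2] dist_nonneg[OF dS] dist_nonneg[OF dA0] dist_nonneg[OF dA2]
    by (auto simp: F_def split: sum.split)
  have "\<forall>d\<subseteq>UNIV. \<exists>l::('y0 \<times> 'a1) + 'a0 + 'a2 \<Rightarrow> real. \<exists>r::nat\<Rightarrow>nat.
    strict_mono r \<and> (\<forall>e>0. eventually (\<lambda>n. \<forall>i\<in>d. dist (F (r n) i) (l i) < e) sequentially)"
  proof (rule compact_lemma_general[where proj="\<lambda>x k. x k" and unproj="\<lambda>g. g"])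
    fix k
    show "bounded ((\<lambda>x. x k) ` range F)"
      unfolding bounded_iff using Fb by auto
  qed auto
  then obtain l r where r: "strict_mono r" and lr: "\<forall>e>0. eventually (\<lambda>n. \<forall>i\<in>UNIV. dist (F (r n) i) (l i) < e) sequentially"
    by blast
  have lim: "(\<lambda>n. F (r n) i) \<longlonglongrightarrow> l i" for i
    unfolding tendsto_iff
  proof (intro allI impI)
    fix e :: real assume "0 < e"
    with lr have "eventually (\<lambda>n. \<forall>i\<in>UNIV. dist (F (r n) i) (l i) < e) sequentially" by blast
    then show "eventually (\<lambda>n. dist (F (r n) i) (l i) < e) sequentially"
      by (rule eventually_mono) blast
  qed
  define s where "s = (\<lambda>y a. l (Inl (y, a)))"
  define \<beta>0 where "\<beta>0 = (\<lambda>a0. l (Inr (Inl a0)))"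
  define \<beta>2 where "\<beta>2 = (\<lambda>a2. l (Inr (Inr a2)))"
  have limS: "(\<lambda>n. S (r n) y a) \<longlonglongrightarrow> s y a" for y a using lim[of "Inl (y, a)"] by (simp add: F_def s_def)
  have limA0: "(\<lambda>n. A0 (r n) a) \<longlonglongrightarrow> \<beta>0 a" for a using lim[of "Inr (Inl a)"] by (simp add: F_def \<beta>0_def)
  have limA2: "(\<lambda>n. A2 (r n) a) \<longlonglongrightarrow> \<beta>2 a" for a using lim[of "Inr (Inr a)"] by (simp add: F_def \<beta>2_def)
  have inv0: "(\<lambda>n. 1 / real (Suc (r n))) \<longlonglongrightarrow> 0"
  proof -
    have "(\<lambda>n. inverse (real (Suc n))) \<longlonglongrightarrow> 0" by (rule LIMSEQ_inverse_real_of_nat)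
    from LIMSEQ_subseq_LIMSEQ[OF this r] show ?thesis by (simp add: o_def divide_inverse)
  qed
  have limT: "(\<lambda>n. T (r n) y a) \<longlonglongrightarrow> s y a" for y a
  proof -
    have "(\<lambda>n. T (r n) y a - S (r n) y a) \<longlonglongrightarrow> 0"
      by (rule Lim_null_comparison[OF _ inv0]) (use H in auto)
    from tendsto_add[OF this limS[of y a]] show ?thesis by simp
  qed
  have ds: "rg_stage1 s" unfolding rg_stage1_def
    using dist_limit[where P="\<lambda>n. S (r n) _", OF dS limS] by blast
  have db0: "rg_dist \<beta>0" by (rule dist_limit[OF dA0 limA0])
  have db2: "rg_dist \<beta>2" by (rule dist_limit[OF dA2 limA2])
  have "eventually (\<lambda>n. \<forall>ya. 0 < s (fst ya) (snd ya) \<longrightarrow> 0 < S (r n) (fst ya) (snd ya)) sequentially"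
  proof (rule eventually_all_finite)
    fix ya :: "'y0 \<times> 'a1"
    show "eventually (\<lambda>n. 0 < s (fst ya) (snd ya) \<longrightarrow> 0 < S (r n) (fst ya) (snd ya)) sequentially"
    proof (cases "0 < s (fst ya) (snd ya)")
      case True
      show ?thesis using order_tendstoD(1)[OF limS True] by (auto elim: eventually_mono)
    qed simp
  qed
  then obtain n0 where n0: "\<And>ya. 0 < s (fst ya) (snd ya) \<Longrightarrow> 0 < S (r n0) (fst ya) (snd ya)"
    by (auto simp: eventually_sequentially)
  have cms: "rg_cm_strategy u1 s"
    unfolding rg_cm_strategy_def
  proof (intro allI impI)
    fix \<alpha>2 :: "'a2 \<Rightarrow> real" assume "rg_dist \<alpha>2"
    then have "rg_cyc_mono (rg_u1_at u1 \<alpha>2) (rg_supp1 (S (r n0)))"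
      using H[of "r n0"] by (simp add: rg_cm_strategy_def)
    moreover have "rg_supp1 s \<subseteq> rg_supp1 (S (r n0))"
      using n0 by (auto simp: rg_supp1_def)
    ultimately show "rg_cyc_mono (rg_u1_at u1 \<alpha>2) (rg_supp1 s)" by (rule cyc_mono_subset)
  qed
  have lim_u0: "(\<lambda>n. rg_u0_s1 \<rho>0 u0 (T (r n)) a) \<longlonglongrightarrow> rg_u0_s1 \<rho>0 u0 s a" for a
    unfolding rg_u0_s1_def by (intro tendsto_intros limT)
  have lim_u2: "(\<lambda>n. rg_u2_s1 \<rho>0 u2 (A0 (r n)) (T (r n)) a) \<longlonglongrightarrow> rg_u2_s1 \<rho>0 u2 \<beta>0 s a" for a
    unfolding rg_u2_s1_def by (intro tendsto_intros limT limA0)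
  have lim_u1: "(\<lambda>n. rg_u1_stage \<rho>0 u1 (A0 (r n)) (S (r n)) (A2 (r n))) \<longlonglongrightarrow> rg_u1_stage \<rho>0 u1 \<beta>0 s \<beta>2"
    unfolding rg_u1_stage_def by (intro tendsto_intros limS limA0 limA2)
  have B: "(\<beta>0, \<beta>2) \<in> rg_B \<rho>0 u0 u2 s"
    unfolding rg_B_def
  proof (simp add: db0 db2, intro conjI allI impI)
    fix a0 a0' assume pos: "0 < \<beta>0 a0"
    have ev: "eventually (\<lambda>n. rg_u0_s1 \<rho>0 u0 (T (r n)) a0' \<le> rg_u0_s1 \<rho>0 u0 (T (r n)) a0) sequentially"
      using order_tendstoD(1)[OF limA0 pos] H by (auto elim!: eventually_mono simp: rg_B_def)
    show "rg_u0_s1 \<rho>0 u0 s a0' \<le> rg_u0_s1 \<rho>0 u0 s a0"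
      by (rule tendsto_le[OF _ lim_u0 lim_u0 ev]) simp
  next
    fix a2 a2' assume pos: "0 < \<beta>2 a2"
    have ev: "eventually (\<lambda>n. rg_u2_s1 \<rho>0 u2 (A0 (r n)) (T (r n)) a2' \<le> rg_u2_s1 \<rho>0 u2 (A0 (r n)) (T (r n)) a2) sequentially"
      using order_tendstoD(1)[OF limA2 pos] H by (auto elim!: eventually_mono simp: rg_B_def)
    show "rg_u2_s1 \<rho>0 u2 \<beta>0 s a2' \<le> rg_u2_s1 \<rho>0 u2 \<beta>0 s a2"
      by (rule tendsto_le[OF _ lim_u2 lim_u2 ev]) simp
  qed
  have up: "ereal (rg_u1_stage \<rho>0 u1 \<beta>0 s \<beta>2) \<le> rg_vCM \<rho>0 u0 u1 u2"
    by (rule vCM_upper[OF ds cms B])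
  have ge: "rg_vCM \<rho>0 u0 u1 u2 + ereal \<epsilon> \<le> ereal (rg_u1_stage \<rho>0 u1 (A0 n) (S n) (A2 n))" for n
    using H[of n] by (simp add: not_less)
  obtain v where v: "rg_vCM \<rho>0 u0 u1 u2 = ereal v"
    using up ge[of 0] by (cases "rg_vCM \<rho>0 u0 u1 u2") auto
  have "v + \<epsilon> \<le> rg_u1_stage \<rho>0 u1 \<beta>0 s \<beta>2"
    by (rule LIMSEQ_le_const[OF lim_u1]) (use ge v in auto)
  moreover have "rg_u1_stage \<rho>0 u1 \<beta>0 s \<beta>2 \<le> v" using up v by simp
  ultimately show False using eps by simp
qed


lemma type_valid:
  assumes "rg_prior \<mu>" "rg_valid1 \<sigma>1" "\<mu> \<omega> \<noteq> 0"
  shows "rg_valid1 (rg_type_strat \<sigma>1 \<omega>)"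
proof (cases \<omega>)
  case None then show ?thesis using assms by (simp add: rg_type_strat_def)
next
  case (Some s1)
  then have "rg_stage1 s1" using assms by (simp add: rg_prior_def)
  then show ?thesis using Some by (simp add: rg_type_strat_def rg_valid1_def rg_stage1_def)
qed

lemma prior_summable: "rg_prior \<mu> \<Longrightarrow> \<mu> summable_on UNIV"
  by (auto simp: rg_prior_def summable_on_def)

lemma prior_infsum: "rg_prior \<mu> \<Longrightarrow> infsum \<mu> UNIV = 1"
  by (auto simp: rg_prior_def infsumI)

lemma summable_mu:
  assumes "rg_prior \<mu>" "\<And>\<omega>. \<mu> \<omega> \<noteq> 0 \<Longrightarrow> 0 \<le> g \<omega> \<and> g \<omega> \<le> 1"
  shows "(\<lambda>\<omega>. \<mu> \<omega> * g \<omega>) summable_on UNIV"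
proof (rule summable_on_comparison_test[OF prior_summable[OF assms(1)]])
  fix \<omega>
  have m: "0 \<le> \<mu> \<omega>" using assms(1) by (simp add: rg_prior_def)
  show "\<mu> \<omega> * g \<omega> \<le> \<mu> \<omega>"
    using assms(2)[of \<omega>] m by (cases "\<mu> \<omega> = 0") (auto intro: mult_left_le)
  show "0 \<le> \<mu> \<omega> * g \<omega>"
    using assms(2)[of \<omega>] m by (cases "\<mu> \<omega> = 0") auto
qed

definition Lf :: "('y0::finite \<Rightarrow> 'a1::finite \<Rightarrow> real) \<Rightarrow> ('y0 \<Rightarrow> 'a1 \<Rightarrow> real) \<Rightarrow> real" where
  "Lf W s = (\<Sum>y0\<in>UNIV. \<Sum>a1\<in>UNIV. s y0 a1 * W y0 a1)"

lemma Lf_hs: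
  fixes N :: "'w \<Rightarrow> 'y0::finite \<Rightarrow> 'a1::finite \<Rightarrow> real"
  assumes "\<And>y0 a1. ((\<lambda>\<omega>. \<mu> \<omega> * N \<omega> y0 a1) has_sum M y0 a1) A"
  shows "((\<lambda>\<omega>. \<mu> \<omega> * Lf W (N \<omega>)) has_sum Lf W M) A"
proof -
  have eq: "(\<lambda>\<omega>. \<mu> \<omega> * (\<Sum>y0\<in>UNIV. \<Sum>a1\<in>UNIV. N \<omega> y0 a1 * W y0 a1)) = (\<lambda>\<omega>. \<Sum>y0\<in>UNIV. \<Sum>a1\<in>UNIV. (\<mu> \<omega> * N \<omega> y0 a1) * W y0 a1)"
    by (simp add: sum_distrib_left mult_ac)
  show ?thesis unfolding Lf_def eq
    by (intro has_sum_sumI has_sum_cmult_left assms) simp_all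
qed

lemma Est_Lf: "Est \<rho>0 G \<alpha>0 s \<alpha>2 = Lf (\<lambda>y0 a1. \<Sum>a0\<in>UNIV. \<alpha>0 a0 * \<rho>0 a0 y0 * (\<Sum>a2\<in>UNIV. \<alpha>2 a2 * G a0 y0 a1 a2)) s"
proof -
  have "Est \<rho>0 G \<alpha>0 s \<alpha>2 = (\<Sum>a0\<in>UNIV. \<Sum>y0\<in>UNIV. \<Sum>a1\<in>UNIV. s y0 a1 * (\<alpha>0 a0 * \<rho>0 a0 y0 * (\<Sum>a2\<in>UNIV. \<alpha>2 a2 * G a0 y0 a1 a2)))"
    by (simp add: Est_def sum_distrib_left mult_ac)
  also have "\<dots> = (\<Sum>y0\<in>UNIV. \<Sum>a0\<in>UNIV. \<Sum>a1\<in>UNIV. s y0 a1 * (\<alpha>0 a0 * \<rho>0 a0 y0 * (\<Sum>a2\<in>UNIV. \<alpha>2 a2 * G a0 y0 a1 a2)))"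
    by (rule sum.swap)
  also have "\<dots> = (\<Sum>y0\<in>UNIV. \<Sum>a1\<in>UNIV. \<Sum>a0\<in>UNIV. s y0 a1 * (\<alpha>0 a0 * \<rho>0 a0 y0 * (\<Sum>a2\<in>UNIV. \<alpha>2 a2 * G a0 y0 a1 a2)))"
    by (rule sum.cong[OF refl]) (rule sum.swap)
  also have "\<dots> = Lf (\<lambda>y0 a1. \<Sum>a0\<in>UNIV. \<alpha>0 a0 * \<rho>0 a0 y0 * (\<Sum>a2\<in>UNIV. \<alpha>2 a2 * G a0 y0 a1 a2)) s"
    by (simp add: Lf_def sum_distrib_left)
  finally show ?thesis .
qed

context rgm begin

lemma hp_cong:
  assumes "\<And>q. length q < length h \<Longrightarrow> \<sigma>0' q = \<sigma>0 q" "\<And>q. length q < length h \<Longrightarrow> \<sigma>2' q = \<sigma>2 q"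
  shows "rg_hist_prob \<rho>0 \<rho>1 \<sigma>0' \<tau> \<sigma>2' h = rg_hist_prob \<rho>0 \<rho>1 \<sigma>0 \<tau> \<sigma>2 h"
  unfolding hp_alt
proof (rule prod.cong[OF refl])
  fix i assume "i \<in> {..<length h}"
  then have l: "length (map rg_pub (take i h)) < length h" by simp
  show "rg_step \<rho>0 \<rho>1 \<sigma>0' \<tau> \<sigma>2' (take i h) (h ! i) = rg_step \<rho>0 \<rho>1 \<sigma>0 \<tau> \<sigma>2 (take i h) (h ! i)"
    unfolding rg_step_def assms(1)[OF l] assms(2)[OF l] by (rule refl)
qed

lemma NR_cong:
  assumes "\<And>q. length q < T \<Longrightarrow> \<sigma>0' q = \<sigma>0 q" "\<And>q. length q < T \<Longrightarrow> \<sigma>2' q = \<sigma>2 q"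
  shows "NR \<rho>0 \<rho>1 \<sigma>0' \<tau> \<sigma>2' T p = NR \<rho>0 \<rho>1 \<sigma>0 \<tau> \<sigma>2 T p"
  unfolding NR_def
proof (intro ext sum.cong refl)
  fix y0 a1 and h :: "('a0 \<times> 'y0 \<times> 'a1 \<times> 'a2 \<times> 'y1) list" assume "h \<in> {h. length h = T}"
  then have "rg_hist_prob \<rho>0 \<rho>1 \<sigma>0' \<tau> \<sigma>2' h = rg_hist_prob \<rho>0 \<rho>1 \<sigma>0 \<tau> \<sigma>2 h"
    by (intro hp_cong) (auto intro: assms)
  then show "(if map rg_pub h = p then rg_hist_prob \<rho>0 \<rho>1 \<sigma>0' \<tau> \<sigma>2' h else 0) * \<tau> (map rg_priv h) y0 a1 =
    (if map rg_pub h = p then rg_hist_prob \<rho>0 \<rho>1 \<sigma>0 \<tau> \<sigma>2 h else 0) * \<tau> (map rg_priv h) y0 a1" by simp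
qed

lemma PR_le1: "valid3 \<sigma>0 \<tau> \<sigma>2 \<Longrightarrow> PR \<rho>0 \<rho>1 \<sigma>0 \<tau> \<sigma>2 T p \<le> 1"
proof -
  assume v: "valid3 \<sigma>0 \<tau> \<sigma>2"
  have "PR \<rho>0 \<rho>1 \<sigma>0 \<tau> \<sigma>2 T p \<le> (\<Sum>h\<in>{h. length h = T}. rg_hist_prob \<rho>0 \<rho>1 \<sigma>0 \<tau> \<sigma>2 h)"
    unfolding PR_def by (rule sum_mono) (simp add: hp_nonneg[OF v])
  then show ?thesis using hp_sum[OF v] by simp
qed

lemma NR_le_PR: "valid3 \<sigma>0 \<tau> \<sigma>2 \<Longrightarrow> NR \<rho>0 \<rho>1 \<sigma>0 \<tau> \<sigma>2 T p y0 a1 \<le> PR \<rho>0 \<rho>1 \<sigma>0 \<tau> \<sigma>2 T p"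
proof -
  assume v: "valid3 \<sigma>0 \<tau> \<sigma>2"
  have "NR \<rho>0 \<rho>1 \<sigma>0 \<tau> \<sigma>2 T p y0 a1 \<le> (\<Sum>a\<in>UNIV. NR \<rho>0 \<rho>1 \<sigma>0 \<tau> \<sigma>2 T p y0 a)"
    by (rule member_le_sum) (auto simp: NR_nonneg[OF v])
  then show ?thesis using NR_sum[OF v] by simp
qed

definition Nmix where
  "Nmix \<mu> \<sigma>0 \<sigma>1 \<sigma>2 T p = (\<lambda>y0 a1. \<Sum>\<^sub>\<infinity>\<omega>. \<mu> \<omega> * NR \<rho>0 \<rho>1 \<sigma>0 (rg_type_strat \<sigma>1 \<omega>) \<sigma>2 T p y0 a1)"

definition Pmix where
  "Pmix \<mu> \<sigma>0 \<sigma>1 \<sigma>2 T p = (\<Sum>\<^sub>\<infinity>\<omega>. \<mu> \<omega> * PR \<rho>0 \<rho>1 \<sigma>0 (rg_type_strat \<sigma>1 \<omega>) \<sigma>2 T p)"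

lemma valid_type3:
  assumes "rg_prior \<mu>" "valid3 \<sigma>0 \<sigma>1 \<sigma>2" "\<mu> \<omega> \<noteq> 0"
  shows "valid3 \<sigma>0 (rg_type_strat \<sigma>1 \<omega>) \<sigma>2"
  using assms type_valid[of \<mu> \<sigma>1 \<omega>] by (simp add: valid3_def)

lemma NR_summable:
  assumes "rg_prior \<mu>" "valid3 \<sigma>0 \<sigma>1 \<sigma>2"
  shows "(\<lambda>\<omega>. \<mu> \<omega> * NR \<rho>0 \<rho>1 \<sigma>0 (rg_type_strat \<sigma>1 \<omega>) \<sigma>2 T p y0 a1) summable_on UNIV"
proof (rule summable_mu[OF assms(1)])
  fix \<omega> assume "\<mu> \<omega> \<noteq> 0"
  then have v': "valid3 \<sigma>0 (rg_type_strat \<sigma>1 \<omega>) \<sigma>2" by (rule valid_type3[OF assms])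
  show "0 \<le> NR \<rho>0 \<rho>1 \<sigma>0 (rg_type_strat \<sigma>1 \<omega>) \<sigma>2 T p y0 a1 \<and> NR \<rho>0 \<rho>1 \<sigma>0 (rg_type_strat \<sigma>1 \<omega>) \<sigma>2 T p y0 a1 \<le> 1"
    using NR_nonneg[OF v'] NR_le_PR[OF v'] PR_le1[OF v'] by (meson order.trans)
qed

lemma PR_summable:
  assumes "rg_prior \<mu>" "valid3 \<sigma>0 \<sigma>1 \<sigma>2"
  shows "(\<lambda>\<omega>. \<mu> \<omega> * PR \<rho>0 \<rho>1 \<sigma>0 (rg_type_strat \<sigma>1 \<omega>) \<sigma>2 T p) summable_on UNIV"
proof (rule summable_mu[OF assms(1)])
  fix \<omega> assume "\<mu> \<omega> \<noteq> 0"
  then have v': "valid3 \<sigma>0 (rg_type_strat \<sigma>1 \<omega>) \<sigma>2" by (rule valid_type3[OF assms])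
  show "0 \<le> PR \<rho>0 \<rho>1 \<sigma>0 (rg_type_strat \<sigma>1 \<omega>) \<sigma>2 T p \<and> PR \<rho>0 \<rho>1 \<sigma>0 (rg_type_strat \<sigma>1 \<omega>) \<sigma>2 T p \<le> 1"
    using PR_nonneg[OF v'] PR_le1[OF v'] by simp
qed

lemma Nmix_hs:
  assumes "rg_prior \<mu>" "valid3 \<sigma>0 \<sigma>1 \<sigma>2"
  shows "((\<lambda>\<omega>. \<mu> \<omega> * NR \<rho>0 \<rho>1 \<sigma>0 (rg_type_strat \<sigma>1 \<omega>) \<sigma>2 T p y0 a1) has_sum Nmix \<mu> \<sigma>0 \<sigma>1 \<sigma>2 T p y0 a1) UNIV"
  unfolding Nmix_def using NR_summable[OF assms] by simp

lemma exante_Est: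
  assumes pr: "rg_prior \<mu>" and v: "valid3 \<sigma>0 \<sigma>1 \<sigma>2"
    and ag: "\<And>q. length q < T \<Longrightarrow> \<sigma>0' q = \<sigma>0 q" "\<And>q. length q < T \<Longrightarrow> \<sigma>2' q = \<sigma>2 q"
  shows "rg_exante \<rho>0 \<rho>1 \<mu> \<sigma>0' \<sigma>1 \<sigma>2' T (\<lambda>(a0, y0, a1, a2, y1). G a0 y0 a1 a2) =
    (\<Sum>p\<in>{p. length p = T}. Est \<rho>0 G (\<sigma>0' p) (Nmix \<mu> \<sigma>0 \<sigma>1 \<sigma>2 T p) (\<sigma>2' p))"
proof -
  define W where "W = (\<lambda>p y0 a1. \<Sum>a0\<in>UNIV. \<sigma>0' p a0 * \<rho>0 a0 y0 * (\<Sum>a2\<in>UNIV. \<sigma>2' p a2 * G a0 y0 a1 a2))"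
  have eq: "(\<lambda>\<omega>. \<mu> \<omega> * rg_exp_stage \<rho>0 \<rho>1 \<sigma>0' (rg_type_strat \<sigma>1 \<omega>) \<sigma>2' T (\<lambda>(a0, y0, a1, a2, y1). G a0 y0 a1 a2))
     = (\<lambda>\<omega>. \<Sum>p\<in>{p. length p = T}. \<mu> \<omega> * Lf (W p) (NR \<rho>0 \<rho>1 \<sigma>0 (rg_type_strat \<sigma>1 \<omega>) \<sigma>2 T p))"
    by (simp add: exp_decomp NR_cong[OF ag] Est_Lf W_def sum_distrib_left)
  have "((\<lambda>\<omega>. \<Sum>p\<in>{p. length p = T}. \<mu> \<omega> * Lf (W p) (NR \<rho>0 \<rho>1 \<sigma>0 (rg_type_strat \<sigma>1 \<omega>) \<sigma>2 T p)) has_sum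
        (\<Sum>p\<in>{p. length p = T}. Lf (W p) (Nmix \<mu> \<sigma>0 \<sigma>1 \<sigma>2 T p))) UNIV"
    by (intro has_sum_sumI Lf_hs Nmix_hs[OF pr v]) (simp add: finite_list_length)
  then have "rg_exante \<rho>0 \<rho>1 \<mu> \<sigma>0' \<sigma>1 \<sigma>2' T (\<lambda>(a0, y0, a1, a2, y1). G a0 y0 a1 a2) =
      (\<Sum>p\<in>{p. length p = T}. Lf (W p) (Nmix \<mu> \<sigma>0 \<sigma>1 \<sigma>2 T p))"
    unfolding rg_exante_def eq by (rule infsumI)
  then show ?thesis by (simp add: Est_Lf W_def)
qed

end


lemma sum_update:
  fixes f f' :: "'a \<Rightarrow> real"
  assumes "finite S" "p \<in> S" "\<And>q. q \<in> S \<Longrightarrow> q \<noteq> p \<Longrightarrow> f' q = f q"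
  shows "sum f' S - sum f S = f' p - f p"
proof -
  have "sum f' S = f' p + sum f' (S - {p})" using assms by (simp add: sum.remove)
  moreover have "sum f S = f p + sum f (S - {p})" using assms by (simp add: sum.remove)
  moreover have "sum f' (S - {p}) = sum f (S - {p})" using assms by (intro sum.cong) auto
  ultimately show ?thesis by simp
qed

lemma rg_B_scale:
  assumes "0 < c"
  shows "rg_B \<rho>0 u0 u2 (\<lambda>y a. c * s y a) = rg_B \<rho>0 u0 u2 s"
proof -
  have e0: "rg_u0_s1 \<rho>0 u0 (\<lambda>y a. c * s y a) a0 = c * rg_u0_s1 \<rho>0 u0 s a0" for a0
    by (simp add: rg_u0_s1_def sum_distrib_left mult_ac)
  have e2: "rg_u2_s1 \<rho>0 u2 \<alpha>0 (\<lambda>y a. c * s y a) a2 = c * rg_u2_s1 \<rho>0 u2 \<alpha>0 s a2" for \<alpha>0 a2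
    by (simp add: rg_u2_s1_def sum_distrib_left mult_ac)
  show ?thesis unfolding rg_B_def e0 e2 using assms by simp
qed

lemma u1stage_scale: "rg_u1_stage \<rho>0 u1 \<alpha>0 (\<lambda>y a. c * s y a) \<alpha>2 = c * rg_u1_stage \<rho>0 u1 \<alpha>0 s \<alpha>2"
  by (simp add: rg_u1_stage_def sum_distrib_left mult_ac)

lemma close_lemma:
  fixes n R w P m \<zeta> :: real
  assumes "0 \<le> n" "n \<le> R" "0 < R" "0 \<le> w" "w \<le> P - m * R" "0 < m" "(1 - \<zeta>) * P \<le> m * R" "0 < P"
  shows "\<bar>(m * n + w) / P - n / R\<bar> \<le> \<zeta>"
proof -
  have mR: "m * R \<le> P" using assms by simp
  have eq: "(m * n + w) / P - n / R = n * ((m * R - P) / (P * R)) + w / P"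
    using assms by (simp add: field_simps)
  have a1: "n * ((m * R - P) / (P * R)) \<le> 0"
    using assms mR by (intro mult_nonneg_nonpos) (auto intro: divide_nonpos_pos)
  have "(m * R - P) / (P * R) \<ge> - \<zeta> / R"
  proof -
    have h1: "- \<zeta> \<le> (m * R - P) / P" using assms by (simp add: field_simps)
    have h2: "- \<zeta> / R \<le> ((m * R - P) / P) / R" using divide_right_mono[OF h1, of R] assms by simp
    then show ?thesis by (simp add: divide_divide_eq_left)
  qed
  then have "n * ((m * R - P) / (P * R)) \<ge> n * (- \<zeta> / R)" using assms by (intro mult_left_mono) auto
  moreover have "n * (- \<zeta> / R) \<ge> - \<zeta>"
  proof (cases "\<zeta> \<ge> 0")
    case True
    have "n / R \<le> 1" using assms by simp
    from mult_left_le[OF this True] have h: "\<zeta> * (n / R) \<le> \<zeta>" .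
    have e: "n * (- \<zeta> / R) = - (\<zeta> * (n / R))" using assms(3) by (simp add: field_simps)
    show ?thesis unfolding e using h by simp
  next
    case False
    then have "\<zeta> * P < 0" using assms(8) by (simp add: mult_neg_pos)
    then have "P < (1 - \<zeta>) * P" by (simp add: algebra_simps)
    then have False using assms(7) mR by simp
    then show ?thesis ..
  qed
  ultimately have a2: "n * ((m * R - P) / (P * R)) \<ge> - \<zeta>" by simp
  have b1: "0 \<le> w / P" using assms by simp
  have b2: "w / P \<le> \<zeta>"
  proof -
    have "w \<le> \<zeta> * P" using assms by (simp add: algebra_simps)
    then show ?thesis using assms by (simp add: divide_le_eq)
  qed
  show ?thesis unfolding eq using a1 a2 b1 b2 by (simp add: abs_le_iff)
qed

context rgm begin

lemma BR:
  assumes pr: "rg_prior \<mu>" and ne: "rg_NE \<rho>0 \<rho>1 u0 u1 u2 \<mu> \<delta> \<sigma>0 \<sigma>1 \<sigma>2" and lp: "length p = T"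
  shows "(\<sigma>0 p, \<sigma>2 p) \<in> rg_B \<rho>0 u0 u2 (Nmix \<mu> \<sigma>0 \<sigma>1 \<sigma>2 T p)"
proof -
  have v: "valid3 \<sigma>0 \<sigma>1 \<sigma>2" using ne by (simp add: rg_NE_def valid3_def)
  have d0: "rg_dist (\<sigma>0 p)" and d2: "rg_dist (\<sigma>2 p)" using valid3D[OF v] by auto
  let ?N = "Nmix \<mu> \<sigma>0 \<sigma>1 \<sigma>2 T p"
  have P0: "rg_u0_s1 \<rho>0 u0 ?N b \<le> (\<Sum>a\<in>UNIV. \<sigma>0 p a * rg_u0_s1 \<rho>0 u0 ?N a)" for b
  proof -
    define \<sigma>0' where "\<sigma>0' = \<sigma>0(p := (\<lambda>a. if a = b then 1 else 0))"
    have vp: "rg_valid_pub \<sigma>0'" using v by (auto simp: \<sigma>0'_def rg_valid_pub_def valid3_def dist_point)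
    have ag: "\<forall>q. length q \<noteq> T \<longrightarrow> \<sigma>0' q = \<sigma>0 q" using lp by (auto simp: \<sigma>0'_def)
    have ne0: "rg_exante \<rho>0 \<rho>1 \<mu> \<sigma>0' \<sigma>1 \<sigma>2 T (\<lambda>(a0, y0, a1, a2, y1). u0 a0 a1)
        \<le> rg_exante \<rho>0 \<rho>1 \<mu> \<sigma>0 \<sigma>1 \<sigma>2 T (\<lambda>(a0, y0, a1, a2, y1). u0 a0 a1)"
      using ne vp ag unfolding rg_NE_def by blast
    have e': "rg_exante \<rho>0 \<rho>1 \<mu> \<sigma>0' \<sigma>1 \<sigma>2 T (\<lambda>(a0, y0, a1, a2, y1). u0 a0 a1) =
        (\<Sum>q\<in>{q. length q = T}. \<Sum>a\<in>UNIV. \<sigma>0' q a * rg_u0_s1 \<rho>0 u0 (Nmix \<mu> \<sigma>0 \<sigma>1 \<sigma>2 T q) a)"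
    proof -
      have "\<And>q. Est \<rho>0 (\<lambda>a0 y0 a1 a2. u0 a0 a1) (\<sigma>0' q) (Nmix \<mu> \<sigma>0 \<sigma>1 \<sigma>2 T q) (\<sigma>2 q) =
          (\<Sum>a\<in>UNIV. \<sigma>0' q a * rg_u0_s1 \<rho>0 u0 (Nmix \<mu> \<sigma>0 \<sigma>1 \<sigma>2 T q) a)"
        by (rule Est_u0[OF valid3D(3)[OF v]])
      moreover have "rg_exante \<rho>0 \<rho>1 \<mu> \<sigma>0' \<sigma>1 \<sigma>2 T (\<lambda>(a0, y0, a1, a2, y1). u0 a0 a1) =
        (\<Sum>q\<in>{q. length q = T}. Est \<rho>0 (\<lambda>a0 y0 a1 a2. u0 a0 a1) (\<sigma>0' q) (Nmix \<mu> \<sigma>0 \<sigma>1 \<sigma>2 T q) (\<sigma>2 q))"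
        by (rule exante_Est[OF pr v]) (use ag in auto)
      ultimately show ?thesis by (simp only:)
    qed
    have e: "rg_exante \<rho>0 \<rho>1 \<mu> \<sigma>0 \<sigma>1 \<sigma>2 T (\<lambda>(a0, y0, a1, a2, y1). u0 a0 a1) =
        (\<Sum>q\<in>{q. length q = T}. \<Sum>a\<in>UNIV. \<sigma>0 q a * rg_u0_s1 \<rho>0 u0 (Nmix \<mu> \<sigma>0 \<sigma>1 \<sigma>2 T q) a)"
    proof -
      have "\<And>q. Est \<rho>0 (\<lambda>a0 y0 a1 a2. u0 a0 a1) (\<sigma>0 q) (Nmix \<mu> \<sigma>0 \<sigma>1 \<sigma>2 T q) (\<sigma>2 q) =
          (\<Sum>a\<in>UNIV. \<sigma>0 q a * rg_u0_s1 \<rho>0 u0 (Nmix \<mu> \<sigma>0 \<sigma>1 \<sigma>2 T q) a)"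
        by (rule Est_u0[OF valid3D(3)[OF v]])
      moreover have "rg_exante \<rho>0 \<rho>1 \<mu> \<sigma>0 \<sigma>1 \<sigma>2 T (\<lambda>(a0, y0, a1, a2, y1). u0 a0 a1) =
        (\<Sum>q\<in>{q. length q = T}. Est \<rho>0 (\<lambda>a0 y0 a1 a2. u0 a0 a1) (\<sigma>0 q) (Nmix \<mu> \<sigma>0 \<sigma>1 \<sigma>2 T q) (\<sigma>2 q))"
        by (rule exante_Est[OF pr v]) auto
      ultimately show ?thesis by (simp only:)
    qed
    have "(\<Sum>a\<in>UNIV. \<sigma>0' p a * rg_u0_s1 \<rho>0 u0 ?N a) - (\<Sum>a\<in>UNIV. \<sigma>0 p a * rg_u0_s1 \<rho>0 u0 ?N a) \<le> 0"
      using ne0 unfolding e e'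
      by (subst sum_update[symmetric, where S="{q. length q = T}"]) (auto simp: lp finite_list_length \<sigma>0'_def)
    then show ?thesis by (simp add: \<sigma>0'_def sum_point)
  qed
  have P2: "rg_u2_s1 \<rho>0 u2 (\<sigma>0 p) ?N b \<le> (\<Sum>a\<in>UNIV. \<sigma>2 p a * rg_u2_s1 \<rho>0 u2 (\<sigma>0 p) ?N a)" for b
  proof -
    define \<sigma>2' where "\<sigma>2' = \<sigma>2(p := (\<lambda>a. if a = b then 1 else 0))"
    have vp: "rg_valid_pub \<sigma>2'" using v by (auto simp: \<sigma>2'_def rg_valid_pub_def valid3_def dist_point)
    have ag: "\<forall>q. length q \<noteq> T \<longrightarrow> \<sigma>2' q = \<sigma>2 q" using lp by (auto simp: \<sigma>2'_def)
    have ne0: "rg_exante \<rho>0 \<rho>1 \<mu> \<sigma>0 \<sigma>1 \<sigma>2' T (\<lambda>(a0, y0, a1, a2, y1). u2 y0 a1 a2)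
        \<le> rg_exante \<rho>0 \<rho>1 \<mu> \<sigma>0 \<sigma>1 \<sigma>2 T (\<lambda>(a0, y0, a1, a2, y1). u2 y0 a1 a2)"
      using ne vp ag unfolding rg_NE_def by blast
    have e': "rg_exante \<rho>0 \<rho>1 \<mu> \<sigma>0 \<sigma>1 \<sigma>2' T (\<lambda>(a0, y0, a1, a2, y1). u2 y0 a1 a2) =
        (\<Sum>q\<in>{q. length q = T}. \<Sum>a\<in>UNIV. \<sigma>2' q a * rg_u2_s1 \<rho>0 u2 (\<sigma>0 q) (Nmix \<mu> \<sigma>0 \<sigma>1 \<sigma>2 T q) a)"
    proof -
      have "\<And>q. Est \<rho>0 (\<lambda>a0 y0 a1 a2. u2 y0 a1 a2) (\<sigma>0 q) (Nmix \<mu> \<sigma>0 \<sigma>1 \<sigma>2 T q) (\<sigma>2' q) =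
          (\<Sum>a\<in>UNIV. \<sigma>2' q a * rg_u2_s1 \<rho>0 u2 (\<sigma>0 q) (Nmix \<mu> \<sigma>0 \<sigma>1 \<sigma>2 T q) a)"
        by (rule Est_u2)
      moreover have "rg_exante \<rho>0 \<rho>1 \<mu> \<sigma>0 \<sigma>1 \<sigma>2' T (\<lambda>(a0, y0, a1, a2, y1). u2 y0 a1 a2) =
        (\<Sum>q\<in>{q. length q = T}. Est \<rho>0 (\<lambda>a0 y0 a1 a2. u2 y0 a1 a2) (\<sigma>0 q) (Nmix \<mu> \<sigma>0 \<sigma>1 \<sigma>2 T q) (\<sigma>2' q))"
        by (rule exante_Est[OF pr v]) (use ag in auto)
      ultimately show ?thesis by (simp only:)
    qed
    have e: "rg_exante \<rho>0 \<rho>1 \<mu> \<sigma>0 \<sigma>1 \<sigma>2 T (\<lambda>(a0, y0, a1, a2, y1). u2 y0 a1 a2) =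
        (\<Sum>q\<in>{q. length q = T}. \<Sum>a\<in>UNIV. \<sigma>2 q a * rg_u2_s1 \<rho>0 u2 (\<sigma>0 q) (Nmix \<mu> \<sigma>0 \<sigma>1 \<sigma>2 T q) a)"
    proof -
      have "\<And>q. Est \<rho>0 (\<lambda>a0 y0 a1 a2. u2 y0 a1 a2) (\<sigma>0 q) (Nmix \<mu> \<sigma>0 \<sigma>1 \<sigma>2 T q) (\<sigma>2 q) =
          (\<Sum>a\<in>UNIV. \<sigma>2 q a * rg_u2_s1 \<rho>0 u2 (\<sigma>0 q) (Nmix \<mu> \<sigma>0 \<sigma>1 \<sigma>2 T q) a)"
        by (rule Est_u2)
      moreover have "rg_exante \<rho>0 \<rho>1 \<mu> \<sigma>0 \<sigma>1 \<sigma>2 T (\<lambda>(a0, y0, a1, a2, y1). u2 y0 a1 a2) =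
        (\<Sum>q\<in>{q. length q = T}. Est \<rho>0 (\<lambda>a0 y0 a1 a2. u2 y0 a1 a2) (\<sigma>0 q) (Nmix \<mu> \<sigma>0 \<sigma>1 \<sigma>2 T q) (\<sigma>2 q))"
        by (rule exante_Est[OF pr v]) auto
      ultimately show ?thesis by (simp only:)
    qed
    have "(\<Sum>a\<in>UNIV. \<sigma>2' p a * rg_u2_s1 \<rho>0 u2 (\<sigma>0 p) ?N a) - (\<Sum>a\<in>UNIV. \<sigma>2 p a * rg_u2_s1 \<rho>0 u2 (\<sigma>0 p) ?N a) \<le> 0"
      using ne0 unfolding e e'
      by (subst sum_update[symmetric, where S="{q. length q = T}"]) (auto simp: lp finite_list_length \<sigma>2'_def)
    then show ?thesis by (simp add: \<sigma>2'_def sum_point)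
  qed
  show ?thesis
    unfolding rg_B_def
  proof (simp add: d0 d2, intro conjI allI impI)
    fix a0 a0' assume "0 < \<sigma>0 p a0"
    then show "rg_u0_s1 \<rho>0 u0 ?N a0' \<le> rg_u0_s1 \<rho>0 u0 ?N a0"
      using P0[of a0'] avg_ge[OF d0 P0] by (meson order.trans)
  next
    fix a2 a2' assume "0 < \<sigma>2 p a2"
    then show "rg_u2_s1 \<rho>0 u2 (\<sigma>0 p) ?N a2' \<le> rg_u2_s1 \<rho>0 u2 (\<sigma>0 p) ?N a2"
      using P2[of a2'] avg_ge[OF d2 P2] by (meson order.trans)
  qed
qed

end


lemma avg_abs_le:
  fixes w X :: "'a::finite \<Rightarrow> real"
  assumes "rg_dist w" "\<And>a. \<bar>X a\<bar> \<le> M"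
  shows "\<bar>\<Sum>a\<in>UNIV. w a * X a\<bar> \<le> M"
proof -
  have "\<bar>\<Sum>a\<in>UNIV. w a * X a\<bar> \<le> (\<Sum>a\<in>UNIV. \<bar>w a * X a\<bar>)" by (rule sum_abs)
  also have "\<dots> \<le> (\<Sum>a\<in>UNIV. w a * M)"
    using assms by (intro sum_mono) (simp add: abs_mult rg_dist_def mult_left_mono)
  also have "\<dots> = M" using assms(1) by (simp add: sum_distrib_right[symmetric] rg_dist_def)
  finally show ?thesis .
qed

lemma u1stage_bound:
  assumes "rg_dist \<alpha>0" "rg_stage1 s" "rg_dist \<alpha>2" "\<forall>a0. rg_dist (\<rho>0 a0)"
  shows "\<bar>rg_u1_stage \<rho>0 u1 \<alpha>0 s \<alpha>2\<bar> \<le> Mu u1"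
  unfolding rg_u1_stage_def
  using assms
  by (intro avg_abs_le) (auto simp: rg_stage1_def intro!: avg_abs_le Mu_bound)

lemma exists_max: "\<exists>a::'a::finite. \<forall>b. (f b :: real) \<le> f a"
proof -
  have "Max (range f) \<in> range f" by (rule Max_in) auto
  then obtain a where "Max (range f) = f a" by blast
  moreover have "\<forall>b. f b \<le> Max (range f)" by (auto intro: Max_ge)
  ultimately show ?thesis by metis
qed

lemma vCM_finite:
  fixes \<rho>0 :: "'a0::finite \<Rightarrow> 'y0::finite \<Rightarrow> real" and u0 :: "'a0 \<Rightarrow> 'a1::finite \<Rightarrow> real"
    and u1 u2 :: "'y0 \<Rightarrow> 'a1 \<Rightarrow> 'a2::finite \<Rightarrow> real"
  assumes r0: "\<forall>a0. rg_dist (\<rho>0 a0)"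
  shows "\<exists>v. rg_vCM \<rho>0 u0 u1 u2 = ereal v \<and> \<bar>v\<bar> \<le> Mu u1"
proof -
  define c :: 'a1 where "c = undefined"
  define s :: "'y0 \<Rightarrow> 'a1 \<Rightarrow> real" where "s = (\<lambda>y a. if a = c then 1 else 0)"
  have st: "rg_stage1 s" by (simp add: s_def rg_stage1_def dist_point)
  have cm: "rg_cm_strategy u1 s"
    unfolding rg_cm_strategy_def rg_cyc_mono_def
  proof (intro allI impI)
    fix \<alpha>2 N and x :: "nat \<Rightarrow> 'y0" and y :: "nat \<Rightarrow> 'a1"
    assume a: "1 \<le> N \<and> (\<forall>i<N. (x i, y i) \<in> rg_supp1 s)"
    then have yc: "\<And>i. i < N \<Longrightarrow> y i = c" by (auto simp: rg_supp1_def s_def split: if_splits)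
    have "\<And>i. i < N \<Longrightarrow> y (Suc i mod N) = c" using a yc by simp
    then show "(\<Sum>i<N. rg_u1_at u1 \<alpha>2 (x i) (y (Suc i mod N))) \<le> (\<Sum>i<N. rg_u1_at u1 \<alpha>2 (x i) (y i))"
      using yc by simp
  qed
  obtain b0 where b0: "\<forall>b. rg_u0_s1 \<rho>0 u0 s b \<le> rg_u0_s1 \<rho>0 u0 s b0" using exists_max by blast
  define \<alpha>0 :: "'a0 \<Rightarrow> real" where "\<alpha>0 = (\<lambda>a. if a = b0 then 1 else 0)"
  obtain b2 where b2: "\<forall>b. rg_u2_s1 \<rho>0 u2 \<alpha>0 s b \<le> rg_u2_s1 \<rho>0 u2 \<alpha>0 s b2" using exists_max by blast
  define \<alpha>2 :: "'a2 \<Rightarrow> real" where "\<alpha>2 = (\<lambda>a. if a = b2 then 1 else 0)"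
  have B: "(\<alpha>0, \<alpha>2) \<in> rg_B \<rho>0 u0 u2 s"
    using b0 b2 by (auto simp: rg_B_def \<alpha>0_def \<alpha>2_def dist_point split: if_splits)
  have lo: "ereal (rg_u1_stage \<rho>0 u1 \<alpha>0 s \<alpha>2) \<le> rg_vCM \<rho>0 u0 u1 u2"
    by (rule vCM_upper[OF st cm B])
  have lo2: "- Mu u1 \<le> rg_u1_stage \<rho>0 u1 \<alpha>0 s \<alpha>2"
    using u1stage_bound[OF _ st _ r0, of \<alpha>0 \<alpha>2 u1] by (simp add: \<alpha>0_def \<alpha>2_def dist_point)
  have up: "rg_vCM \<rho>0 u0 u1 u2 \<le> ereal (Mu u1)"
    unfolding rg_vCM_def
  proof (rule SUP_least, rule SUP_least)
    fix s' p assume s': "s' \<in> {s1. rg_stage1 s1 \<and> rg_cm_strategy u1 s1}" and p: "p \<in> rg_B \<rho>0 u0 u2 s'"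
    then have "\<bar>rg_u1_stage \<rho>0 u1 (fst p) s' (snd p)\<bar> \<le> Mu u1"
      by (intro u1stage_bound r0) (auto simp: rg_B_def)
    then show "ereal (rg_u1_stage \<rho>0 u1 (fst p) s' (snd p)) \<le> ereal (Mu u1)" by simp
  qed
  obtain v where v: "rg_vCM \<rho>0 u0 u1 u2 = ereal v"
    using lo up by (cases "rg_vCM \<rho>0 u0 u1 u2") auto
  have "\<bar>v\<bar> \<le> Mu u1" using lo lo2 up v by auto
  then show ?thesis using v by blast
qed

context rgm begin

lemma term_nonneg:
  assumes pr: "rg_prior \<mu>" and v: "valid3 \<sigma>0 \<sigma>1 \<sigma>2"
  shows "0 \<le> \<mu> \<omega> * NR \<rho>0 \<rho>1 \<sigma>0 (rg_type_strat \<sigma>1 \<omega>) \<sigma>2 T p y0 a1"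
    "0 \<le> \<mu> \<omega> * PR \<rho>0 \<rho>1 \<sigma>0 (rg_type_strat \<sigma>1 \<omega>) \<sigma>2 T p"
proof -
  have m: "0 \<le> \<mu> \<omega>" using pr by (simp add: rg_prior_def)
  show "0 \<le> \<mu> \<omega> * NR \<rho>0 \<rho>1 \<sigma>0 (rg_type_strat \<sigma>1 \<omega>) \<sigma>2 T p y0 a1"
  proof (cases "\<mu> \<omega> = 0")
    case False
    then show ?thesis using m NR_nonneg[OF valid_type3[OF pr v False]] by simp
  qed simp
  show "0 \<le> \<mu> \<omega> * PR \<rho>0 \<rho>1 \<sigma>0 (rg_type_strat \<sigma>1 \<omega>) \<sigma>2 T p"
  proof (cases "\<mu> \<omega> = 0")
    case False
    then show ?thesis using m PR_nonneg[OF valid_type3[OF pr v False]] by simp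
  qed simp
qed

lemma Nmix_ge:
  assumes pr: "rg_prior \<mu>" and v: "valid3 \<sigma>0 \<sigma>1 \<sigma>2"
  shows "\<mu> None * NR \<rho>0 \<rho>1 \<sigma>0 \<sigma>1 \<sigma>2 T p y0 a1 \<le> Nmix \<mu> \<sigma>0 \<sigma>1 \<sigma>2 T p y0 a1"
proof -
  have "(\<Sum>\<omega>\<in>{None}. \<mu> \<omega> * NR \<rho>0 \<rho>1 \<sigma>0 (rg_type_strat \<sigma>1 \<omega>) \<sigma>2 T p y0 a1) \<le> Nmix \<mu> \<sigma>0 \<sigma>1 \<sigma>2 T p y0 a1"
    unfolding Nmix_def by (rule finite_sum_le_infsum[OF NR_summable[OF pr v]]) (auto intro: term_nonneg[OF pr v])
  then show ?thesis by (simp add: rg_type_strat_def)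
qed

lemma Pmix_ge:
  assumes pr: "rg_prior \<mu>" and v: "valid3 \<sigma>0 \<sigma>1 \<sigma>2"
  shows "\<mu> None * PR \<rho>0 \<rho>1 \<sigma>0 \<sigma>1 \<sigma>2 T p \<le> Pmix \<mu> \<sigma>0 \<sigma>1 \<sigma>2 T p"
proof -
  have "(\<Sum>\<omega>\<in>{None}. \<mu> \<omega> * PR \<rho>0 \<rho>1 \<sigma>0 (rg_type_strat \<sigma>1 \<omega>) \<sigma>2 T p) \<le> Pmix \<mu> \<sigma>0 \<sigma>1 \<sigma>2 T p"
    unfolding Pmix_def by (rule finite_sum_le_infsum[OF PR_summable[OF pr v]]) (auto intro: term_nonneg[OF pr v])
  then show ?thesis by (simp add: rg_type_strat_def)
qed

lemma Nmix_sum: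
  assumes pr: "rg_prior \<mu>" and v: "valid3 \<sigma>0 \<sigma>1 \<sigma>2"
  shows "(\<Sum>a1\<in>UNIV. Nmix \<mu> \<sigma>0 \<sigma>1 \<sigma>2 T p y0 a1) = Pmix \<mu> \<sigma>0 \<sigma>1 \<sigma>2 T p"
proof -
  have hs: "((\<lambda>\<omega>. \<Sum>a1\<in>UNIV. \<mu> \<omega> * NR \<rho>0 \<rho>1 \<sigma>0 (rg_type_strat \<sigma>1 \<omega>) \<sigma>2 T p y0 a1) has_sum
      (\<Sum>a1\<in>UNIV. Nmix \<mu> \<sigma>0 \<sigma>1 \<sigma>2 T p y0 a1)) UNIV"
    by (intro has_sum_sumI Nmix_hs[OF pr v]) simp
  have eq: "(\<lambda>\<omega>. \<Sum>a1\<in>UNIV. \<mu> \<omega> * NR \<rho>0 \<rho>1 \<sigma>0 (rg_type_strat \<sigma>1 \<omega>) \<sigma>2 T p y0 a1) =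
     (\<lambda>\<omega>. \<mu> \<omega> * PR \<rho>0 \<rho>1 \<sigma>0 (rg_type_strat \<sigma>1 \<omega>) \<sigma>2 T p)"
  proof
    fix \<omega>
    show "(\<Sum>a1\<in>UNIV. \<mu> \<omega> * NR \<rho>0 \<rho>1 \<sigma>0 (rg_type_strat \<sigma>1 \<omega>) \<sigma>2 T p y0 a1) =
     \<mu> \<omega> * PR \<rho>0 \<rho>1 \<sigma>0 (rg_type_strat \<sigma>1 \<omega>) \<sigma>2 T p"
    proof (cases "\<mu> \<omega> = 0")
      case False
      then show ?thesis using NR_sum[OF valid_type3[OF pr v False]] by (simp add: sum_distrib_left[symmetric])
    qed simp
  qed
  show ?thesis using hs unfolding eq Pmix_def by (simp add: infsumI)
qed

lemma Nmix_nonneg: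
  assumes pr: "rg_prior \<mu>" and v: "valid3 \<sigma>0 \<sigma>1 \<sigma>2"
  shows "0 \<le> Nmix \<mu> \<sigma>0 \<sigma>1 \<sigma>2 T p y0 a1"
  unfolding Nmix_def by (rule infsum_nonneg) (rule term_nonneg[OF pr v])

lemma bad_mass:
  assumes pr: "rg_prior \<mu>" and v: "valid3 \<sigma>0 \<sigma>1 \<sigma>2" and Bad: "Bad \<subseteq> {p. length p = T}"
  shows "(\<Sum>p\<in>Bad. Pmix \<mu> \<sigma>0 \<sigma>1 \<sigma>2 T p) \<le> \<mu> None * (\<Sum>p\<in>Bad. PR \<rho>0 \<rho>1 \<sigma>0 \<sigma>1 \<sigma>2 T p) + (1 - \<mu> None)"
proof -
  have fB: "finite Bad" using Bad finite_list_length by (rule finite_subset)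
  define X where "X = (\<Sum>p\<in>Bad. PR \<rho>0 \<rho>1 \<sigma>0 \<sigma>1 \<sigma>2 T p)"
  define Z where "Z = (\<lambda>\<omega>. \<Sum>p\<in>Bad. \<mu> \<omega> * PR \<rho>0 \<rho>1 \<sigma>0 (rg_type_strat \<sigma>1 \<omega>) \<sigma>2 T p)"
  have hZ: "(Z has_sum (\<Sum>p\<in>Bad. Pmix \<mu> \<sigma>0 \<sigma>1 \<sigma>2 T p)) UNIV"
    unfolding Z_def Pmix_def using PR_summable[OF pr v] by (intro has_sum_sumI fB) simp
  define g where "g = (\<lambda>\<omega>. \<mu> \<omega> + (if \<omega> = None then \<mu> None * X - \<mu> None else 0))"
  have hmu: "(\<mu> has_sum 1) UNIV" using pr by (simp add: rg_prior_def)
  have hsing: "((\<lambda>\<omega>. if \<omega> = None then \<mu> None * X - \<mu> None else 0) has_sum (\<mu> None * X - \<mu> None)) UNIV"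
    by (rule has_sum_finite_neutralI[of "{None}"]) auto
  have hg: "(g has_sum (1 + (\<mu> None * X - \<mu> None))) UNIV"
    unfolding g_def by (rule has_sum_add[OF hmu hsing])
  have le: "Z \<omega> \<le> g \<omega>" for \<omega>
  proof (cases "\<omega> = None")
    case True
    have "Z \<omega> = \<mu> None * X" using True by (simp add: Z_def X_def rg_type_strat_def sum_distrib_left)
    moreover have "g \<omega> = \<mu> None * X" using True by (simp add: g_def)
    ultimately show ?thesis by simp
  next
    case False
    have m: "0 \<le> \<mu> \<omega>" using pr by (simp add: rg_prior_def)
    have "Z \<omega> \<le> \<mu> \<omega>"
    proof (cases "\<mu> \<omega> = 0")
      case True then show ?thesis by (simp add: Z_def)
    next
      case nz: False
      have v': "valid3 \<sigma>0 (rg_type_strat \<sigma>1 \<omega>) \<sigma>2" by (rule valid_type3[OF pr v nz])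
      have "(\<Sum>p\<in>Bad. PR \<rho>0 \<rho>1 \<sigma>0 (rg_type_strat \<sigma>1 \<omega>) \<sigma>2 T p) \<le> (\<Sum>p\<in>{p. length p = T}. PR \<rho>0 \<rho>1 \<sigma>0 (rg_type_strat \<sigma>1 \<omega>) \<sigma>2 T p)"
        by (rule sum_mono2[OF finite_list_length Bad]) (simp add: PR_nonneg[OF v'])
      also have "\<dots> = 1" by (rule PR_sum[OF v'])
      finally have "(\<Sum>p\<in>Bad. PR \<rho>0 \<rho>1 \<sigma>0 (rg_type_strat \<sigma>1 \<omega>) \<sigma>2 T p) \<le> 1" .
      then show ?thesis using m by (simp add: Z_def sum_distrib_left[symmetric] mult_left_le)
    qed
    moreover have "g \<omega> = \<mu> \<omega>" unfolding g_def by (subst if_not_P[OF False]) simp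
    ultimately show ?thesis by simp
  qed
  have "(\<Sum>p\<in>Bad. Pmix \<mu> \<sigma>0 \<sigma>1 \<sigma>2 T p) \<le> 1 + (\<mu> None * X - \<mu> None)"
    by (rule has_sum_mono[OF hZ hg]) (use le in auto)
  then show ?thesis by (simp add: X_def)
qed

end


lemma prior_le1: "rg_prior \<mu> \<Longrightarrow> \<mu> x \<le> 1"
proof -
  assume pr: "rg_prior \<mu>"
  have "(\<Sum>\<omega>\<in>{x}. \<mu> \<omega>) \<le> infsum \<mu> UNIV"
    by (rule finite_sum_le_infsum[OF prior_summable[OF pr]]) (use pr in \<open>auto simp: rg_prior_def\<close>)
  then show ?thesis using prior_infsum[OF pr] by simp
qed

context rgm begin

lemma per_p:
  assumes pr: "rg_prior \<mu>" and ne: "rg_NE \<rho>0 \<rho>1 u0 u1 u2 \<mu> \<delta> \<sigma>0 \<sigma>1 \<sigma>2" and d: "0 < \<delta>" "\<delta> < 1"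
    and full: "\<And>a0 y0. 0 < \<rho>0 a0 y0" and sep: "rg_cyc_separable u1"
    and comp: "\<And>s t \<alpha>0 \<alpha>2. rg_stage1 s \<Longrightarrow> rg_cm_strategy u1 s \<Longrightarrow> (\<forall>y a. \<bar>t y a - s y a\<bar> \<le> \<zeta>) \<Longrightarrow>
        (\<alpha>0, \<alpha>2) \<in> rg_B \<rho>0 u0 u2 t \<Longrightarrow> rg_u1_stage \<rho>0 u1 \<alpha>0 s \<alpha>2 < V"
    and lp: "length p = T"
  shows "rg_u1_stage \<rho>0 u1 (\<sigma>0 p) (NR \<rho>0 \<rho>1 \<sigma>0 \<sigma>1 \<sigma>2 T p) (\<sigma>2 p) \<le>
     PR \<rho>0 \<rho>1 \<sigma>0 \<sigma>1 \<sigma>2 T p * V +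
     (if \<mu> None * PR \<rho>0 \<rho>1 \<sigma>0 \<sigma>1 \<sigma>2 T p < (1 - \<zeta>) * Pmix \<mu> \<sigma>0 \<sigma>1 \<sigma>2 T p
      then PR \<rho>0 \<rho>1 \<sigma>0 \<sigma>1 \<sigma>2 T p * (Mu u1 + \<bar>V\<bar>) else 0)"
proof -
  have v: "valid3 \<sigma>0 \<sigma>1 \<sigma>2" using ne by (simp add: rg_NE_def valid3_def)
  have opt: "\<And>\<sigma>1'. rg_valid1 \<sigma>1' \<Longrightarrow> rg_U1 \<rho>0 \<rho>1 u1 \<delta> \<sigma>0 \<sigma>1' \<sigma>2 \<le> rg_U1 \<rho>0 \<rho>1 u1 \<delta> \<sigma>0 \<sigma>1 \<sigma>2"
    using ne by (simp add: rg_NE_def)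
  define R where "R = PR \<rho>0 \<rho>1 \<sigma>0 \<sigma>1 \<sigma>2 T p"
  define N where "N = NR \<rho>0 \<rho>1 \<sigma>0 \<sigma>1 \<sigma>2 T p"
  define P where "P = Pmix \<mu> \<sigma>0 \<sigma>1 \<sigma>2 T p"
  define m where "m = \<mu> None"
  have R0: "0 \<le> R" unfolding R_def by (rule PR_nonneg[OF v])
  have N0: "0 \<le> N y a" for y a unfolding N_def by (rule NR_nonneg[OF v])
  have NR: "N y a \<le> R" for y a unfolding N_def R_def by (rule NR_le_PR[OF v])
  have Nsum: "(\<Sum>a\<in>UNIV. N y a) = R" for y unfolding N_def R_def by (rule NR_sum[OF v])
  have m0: "0 < m" using pr by (simp add: rg_prior_def m_def)
  show ?thesis
  proof (cases "R = 0")
    case True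
    then have "N = (\<lambda>y a. 0 * N y a)" using N0 NR by (intro ext) (metis antisym mult_zero_left)
    then have "rg_u1_stage \<rho>0 u1 (\<sigma>0 p) N (\<sigma>2 p) = 0 * rg_u1_stage \<rho>0 u1 (\<sigma>0 p) N (\<sigma>2 p)"
      by (metis u1stage_scale)
    then show ?thesis using True by (simp add: R_def[symmetric] N_def[symmetric])
  next
    case False
    then have Rpos: "0 < R" using R0 by simp
    define s where "s = (\<lambda>y a. N y a / R)"
    have Ns: "N = (\<lambda>y a. R * s y a)" using Rpos by (simp add: s_def)
    have st: "rg_stage1 s"
      unfolding rg_stage1_def rg_dist_def
      using N0 Nsum Rpos by (simp add: s_def sum_divide_distrib[symmetric])
    have supp: "rg_supp1 s = rg_supp1 N" using Rpos by (auto simp: rg_supp1_def s_def zero_less_divide_iff)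
    have cm0: "rg_cyc_mono (rg_u1_at u1 (\<sigma>2 p)) (rg_supp1 N)"
      unfolding N_def by (rule CM_at[OF v d opt full])
    have cm: "rg_cm_strategy u1 s"
      unfolding rg_cm_strategy_def supp
      using sep cm0 valid3D(3)[OF v] unfolding rg_cyc_separable_def by blast
    have bnd: "\<bar>rg_u1_stage \<rho>0 u1 (\<sigma>0 p) s (\<sigma>2 p)\<bar> \<le> Mu u1"
      by (rule u1stage_bound[OF valid3D(1)[OF v] st valid3D(3)[OF v] rho0])
    have scale: "rg_u1_stage \<rho>0 u1 (\<sigma>0 p) N (\<sigma>2 p) = R * rg_u1_stage \<rho>0 u1 (\<sigma>0 p) s (\<sigma>2 p)"
      unfolding Ns by (rule u1stage_scale)
    show ?thesis
    proof (cases "m * R < (1 - \<zeta>) * P")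
      case True
      have "R * rg_u1_stage \<rho>0 u1 (\<sigma>0 p) s (\<sigma>2 p) \<le> R * Mu u1"
        using bnd Rpos by (intro mult_left_mono) auto
      also have "\<dots> \<le> R * V + R * (Mu u1 + \<bar>V\<bar>)"
      proof -
        have "0 \<le> R * (V + \<bar>V\<bar>)" using Rpos by (intro mult_nonneg_nonneg) auto
        then show ?thesis by (simp add: algebra_simps)
      qed
      finally show ?thesis using True
        by (simp add: scale[unfolded N_def] R_def[symmetric] P_def[symmetric] m_def[symmetric])
    next
      case False
      then have good: "(1 - \<zeta>) * P \<le> m * R" by simp
      have PmR: "m * R \<le> P" unfolding m_def R_def P_def by (rule Pmix_ge[OF pr v])
      have Ppos: "0 < P" using PmR m0 Rpos by (smt (verit) mult_pos_pos)
      define t where "t = (\<lambda>y a. Nmix \<mu> \<sigma>0 \<sigma>1 \<sigma>2 T p y a / P)"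
      have Nt: "Nmix \<mu> \<sigma>0 \<sigma>1 \<sigma>2 T p = (\<lambda>y a. P * t y a)" using Ppos by (simp add: t_def)
      have B: "(\<sigma>0 p, \<sigma>2 p) \<in> rg_B \<rho>0 u0 u2 t"
        using BR[OF pr ne lp] unfolding Nt rg_B_scale[OF Ppos] .
      have close: "\<bar>t y a - s y a\<bar> \<le> \<zeta>" for y a
      proof -
        define w where "w = (\<lambda>a. Nmix \<mu> \<sigma>0 \<sigma>1 \<sigma>2 T p y a - m * N y a)"
        have w0: "0 \<le> w a'" for a' using Nmix_ge[OF pr v] by (simp add: w_def m_def N_def)
        have ws: "(\<Sum>a'\<in>UNIV. w a') = P - m * R"
          unfolding w_def by (simp add: sum_subtractf Nmix_sum[OF pr v] P_def sum_distrib_left[symmetric] Nsum)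
        have wle: "w a \<le> P - m * R"
          unfolding ws[symmetric] by (rule member_le_sum) (auto intro: w0)
        have "\<bar>(m * N y a + w a) / P - N y a / R\<bar> \<le> \<zeta>"
          by (rule close_lemma) (use N0 NR Rpos w0 wle m0 good Ppos in auto)
        then show ?thesis by (simp add: t_def s_def w_def)
      qed
      have "rg_u1_stage \<rho>0 u1 (\<sigma>0 p) s (\<sigma>2 p) < V"
        by (rule comp[OF st cm _ B]) (use close in auto)
      then have "R * rg_u1_stage \<rho>0 u1 (\<sigma>0 p) s (\<sigma>2 p) \<le> R * V"
        using Rpos by (intro mult_left_mono) auto
      then show ?thesis using False
        by (simp add: scale[unfolded N_def] R_def[symmetric] P_def[symmetric] m_def[symmetric])
    qed
  qed
qed

end


context rgm begin

lemma period_bound: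
  assumes pr: "rg_prior \<mu>" and ne: "rg_NE \<rho>0 \<rho>1 u0 u1 u2 \<mu> \<delta> \<sigma>0 \<sigma>1 \<sigma>2" and d: "0 < \<delta>" "\<delta> < 1"
    and full: "\<And>a0 y0. 0 < \<rho>0 a0 y0" and sep: "rg_cyc_separable u1"
    and comp: "\<And>s t \<alpha>0 \<alpha>2. rg_stage1 s \<Longrightarrow> rg_cm_strategy u1 s \<Longrightarrow> (\<forall>y a. \<bar>t y a - s y a\<bar> \<le> \<zeta>) \<Longrightarrow>
        (\<alpha>0, \<alpha>2) \<in> rg_B \<rho>0 u0 u2 t \<Longrightarrow> rg_u1_stage \<rho>0 u1 \<alpha>0 s \<alpha>2 < V"
    and z: "0 < \<zeta>" "\<zeta> \<le> 1"
  shows "rg_exp_stage \<rho>0 \<rho>1 \<sigma>0 \<sigma>1 \<sigma>2 T (fu1 u1) \<le> V + (Mu u1 + \<bar>V\<bar>) * ((1 - \<mu> None) / (\<zeta> * \<mu> None))"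
proof -
  have v: "valid3 \<sigma>0 \<sigma>1 \<sigma>2" using ne by (simp add: rg_NE_def valid3_def)
  define C where "C = Mu u1 + \<bar>V\<bar>"
  define m where "m = \<mu> None"
  define S where "S = {p::'y1 list. length p = T}"
  define PRR where "PRR = PR \<rho>0 \<rho>1 \<sigma>0 \<sigma>1 \<sigma>2 T"
  define PM where "PM = Pmix \<mu> \<sigma>0 \<sigma>1 \<sigma>2 T"
  define Bad where "Bad = {p \<in> S. m * PRR p < (1 - \<zeta>) * PM p}"
  have C0: "0 \<le> C" unfolding C_def using order.trans[OF abs_ge_zero Mu_bound, of u1] by simp
  have m0: "0 < m" using pr by (simp add: rg_prior_def m_def)
  have m1: "m \<le> 1" unfolding m_def by (rule prior_le1[OF pr])
  have fS: "finite S" by (simp add: S_def finite_list_length)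
  have "rg_exp_stage \<rho>0 \<rho>1 \<sigma>0 \<sigma>1 \<sigma>2 T (fu1 u1) =
      (\<Sum>p\<in>S. rg_u1_stage \<rho>0 u1 (\<sigma>0 p) (NR \<rho>0 \<rho>1 \<sigma>0 \<sigma>1 \<sigma>2 T p) (\<sigma>2 p))"
    using exp_decomp[of \<sigma>0 \<sigma>1 \<sigma>2 T "\<lambda>a0 y0 a1 a2. u1 y0 a1 a2"] by (simp add: fu1_def Est_u1 S_def)
  also have "\<dots> \<le> (\<Sum>p\<in>S. PRR p * V + (if p \<in> Bad then PRR p * C else 0))"
  proof (rule sum_mono)
    fix p assume "p \<in> S"
    then have lp: "length p = T" by (simp add: S_def)
    show "rg_u1_stage \<rho>0 u1 (\<sigma>0 p) (NR \<rho>0 \<rho>1 \<sigma>0 \<sigma>1 \<sigma>2 T p) (\<sigma>2 p) \<le> PRR p * V + (if p \<in> Bad then PRR p * C else 0)"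
    proof -
      have pp: "rg_u1_stage \<rho>0 u1 (\<sigma>0 p) (NR \<rho>0 \<rho>1 \<sigma>0 \<sigma>1 \<sigma>2 T p) (\<sigma>2 p) \<le>
         PR \<rho>0 \<rho>1 \<sigma>0 \<sigma>1 \<sigma>2 T p * V +
         (if \<mu> None * PR \<rho>0 \<rho>1 \<sigma>0 \<sigma>1 \<sigma>2 T p < (1 - \<zeta>) * Pmix \<mu> \<sigma>0 \<sigma>1 \<sigma>2 T p
          then PR \<rho>0 \<rho>1 \<sigma>0 \<sigma>1 \<sigma>2 T p * (Mu u1 + \<bar>V\<bar>) else 0)"
        by (rule per_p[OF pr ne d full sep _ lp]) (rule comp)
      then show ?thesis using \<open>p \<in> S\<close> by (simp add: Bad_def PRR_def PM_def C_def m_def split: if_splits)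
    qed
  qed
  also have "\<dots> = V * (\<Sum>p\<in>S. PRR p) + C * (\<Sum>p\<in>Bad. PRR p)"
  proof -
    have "(\<Sum>p\<in>S. (if p \<in> Bad then PRR p * C else 0)) = (\<Sum>p\<in>Bad. PRR p * C)"
    proof -
      have "(\<Sum>p\<in>S. (if p \<in> Bad then PRR p * C else 0)) = sum (\<lambda>p. PRR p * C) (S \<inter> Bad)"
        by (rule sum.inter_restrict[symmetric, OF fS])
      also have "S \<inter> Bad = Bad" by (auto simp: Bad_def)
      finally show ?thesis .
    qed
    then show ?thesis by (simp add: sum.distrib sum_distrib_left sum_distrib_right mult_ac)
  qed
  also have "(\<Sum>p\<in>S. PRR p) = 1" unfolding S_def PRR_def by (rule PR_sum[OF v])
  finally have E: "rg_exp_stage \<rho>0 \<rho>1 \<sigma>0 \<sigma>1 \<sigma>2 T (fu1 u1) \<le> V + C * (\<Sum>p\<in>Bad. PRR p)" by simp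
  define X where "X = (\<Sum>p\<in>Bad. PRR p)"
  have BS: "Bad \<subseteq> {p. length p = T}" by (auto simp: Bad_def S_def)
  have bm: "(\<Sum>p\<in>Bad. PM p) \<le> m * X + (1 - m)"
    using bad_mass[OF pr v BS] by (simp add: PM_def X_def PRR_def m_def)
  have fB: "finite Bad" using fS by (simp add: Bad_def)
  have "m * X = (\<Sum>p\<in>Bad. m * PRR p)" by (simp add: X_def sum_distrib_left)
  also have "\<dots> \<le> (\<Sum>p\<in>Bad. (1 - \<zeta>) * PM p)" by (rule sum_mono) (simp add: Bad_def)
  also have "\<dots> = (1 - \<zeta>) * (\<Sum>p\<in>Bad. PM p)" by (simp add: sum_distrib_left)
  also have "\<dots> \<le> (1 - \<zeta>) * (m * X + (1 - m))" using bm z by (intro mult_left_mono) auto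
  finally have "m * X \<le> (1 - \<zeta>) * (m * X + (1 - m))" .
  then have "\<zeta> * m * X \<le> (1 - \<zeta>) * (1 - m)" by (simp add: algebra_simps)
  also have "\<dots> \<le> 1 - m" using z m1 by (simp add: algebra_simps)
  finally have "(\<zeta> * m) * X \<le> 1 - m" by (simp add: mult_ac)
  then have X: "X \<le> (1 - m) / (\<zeta> * m)" using z m0 by (simp add: pos_le_divide_eq mult.commute)
  have "C * X \<le> C * ((1 - m) / (\<zeta> * m))" using X C0 by (rule mult_left_mono)
  then show ?thesis using E by (simp add: C_def m_def X_def)
qed

lemma U1_bound:
  assumes v: "valid3 \<sigma>0 \<sigma>1 \<sigma>2" and d: "0 < \<delta>" "\<delta> < 1"
    and E: "\<And>T. rg_exp_stage \<rho>0 \<rho>1 \<sigma>0 \<sigma>1 \<sigma>2 T (fu1 u1) \<le> Bnd"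
  shows "rg_U1 \<rho>0 \<rho>1 u1 \<delta> \<sigma>0 \<sigma>1 \<sigma>2 \<le> Bnd"
proof -
  have s1: "summable (\<lambda>t. \<delta> ^ t * rg_exp_stage \<rho>0 \<rho>1 \<sigma>0 \<sigma>1 \<sigma>2 t (fu1 u1))"
    using d by (intro summable_disc[where M="Mu u1"]) (auto intro!: exp_bound[OF v] fu1_bound)
  have s2: "summable (\<lambda>t. \<delta> ^ t * Bnd)"
    using d by (intro summable_disc[where M="\<bar>Bnd\<bar>"]) auto
  have "(\<Sum>t. \<delta> ^ t * rg_exp_stage \<rho>0 \<rho>1 \<sigma>0 \<sigma>1 \<sigma>2 t (fu1 u1)) \<le> (\<Sum>t. \<delta> ^ t * Bnd)"
    by (rule suminf_le[OF _ s1 s2]) (use d E in \<open>auto intro: mult_left_mono\<close>)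
  also have "(\<Sum>t. \<delta> ^ t * Bnd) = (\<Sum>t. \<delta> ^ t) * Bnd"
    by (rule suminf_mult2[symmetric]) (use d in \<open>auto intro: summable_geometric\<close>)
  also have "(\<Sum>t. \<delta> ^ t) = 1 / (1 - \<delta>)" using d by (intro suminf_geometric) auto
  finally have "(1 - \<delta>) * (\<Sum>t. \<delta> ^ t * rg_exp_stage \<rho>0 \<rho>1 \<sigma>0 \<sigma>1 \<sigma>2 t (fu1 u1)) \<le> (1 - \<delta>) * (1 / (1 - \<delta>) * Bnd)"
    using d by (intro mult_left_mono) auto
  then show ?thesis using d by (simp add: U1_alt)
qed

end

theorem proposition5:
  fixes \<rho>0 :: "'a0::finite \<Rightarrow> 'y0::finite \<Rightarrow> real"
    and \<rho>1 :: "'a1::finite \<Rightarrow> 'a2::finite \<Rightarrow> 'y1::finite \<Rightarrow> real"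
    and u0 :: "'a0 \<Rightarrow> 'a1 \<Rightarrow> real"
    and u1 u2 :: "'y0 \<Rightarrow> 'a1 \<Rightarrow> 'a2 \<Rightarrow> real"
  assumes rho0_dist: "\<forall>a0. rg_dist (\<rho>0 a0)"
    and rho1_dist: "\<forall>a1 a2. rg_dist (\<rho>1 a1 a2)"
    and full_support0: "\<forall>a0 y0. 0 < \<rho>0 a0 y0"
    and support1: "\<forall>y1 a1 a2 a2'. 0 < \<rho>1 a1 a2 y1 \<longrightarrow> 0 < \<rho>1 a1 a2' y1"
    and lin_indep: "\<forall>a2 (c::'a1 \<Rightarrow> real).
                      (\<forall>y1. (\<Sum>a1\<in>UNIV. c a1 * \<rho>1 a1 a2 y1) = 0) \<longrightarrow> (\<forall>a1. c a1 = 0)"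
    and sep: "rg_cyc_separable u1"
  shows "\<forall>\<epsilon>>0. \<exists>\<kappa>>0. \<forall>\<mu>0 \<delta>.
           rg_prior \<mu>0 \<and> 1 - \<kappa> < \<mu>0 None \<and> 0 < \<delta> \<and> \<delta> < 1 \<longrightarrow>
           rg_U1bar \<rho>0 \<rho>1 u0 u1 u2 \<mu>0 \<delta> < rg_vCM \<rho>0 u0 u1 u2 + ereal \<epsilon>"
proof (intro allI impI)
  fix \<epsilon> :: real assume eps: "0 < \<epsilon>"
  interpret R: rgm \<rho>0 \<rho>1 using rho0_dist rho1_dist by unfold_locales
  have full: "\<And>a0 y0. 0 < \<rho>0 a0 y0" using full_support0 by blast
  obtain v where v: "rg_vCM \<rho>0 u0 u1 u2 = ereal v" "\<bar>v\<bar> \<le> Mu u1"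
    using vCM_finite[OF rho0_dist, of u0 u1 u2] by blast
  have e4: "0 < \<epsilon> / 4" using eps by simp
  have "\<exists>\<eta>>0. \<forall>s t \<alpha>0 \<alpha>2. rg_stage1 s \<and> rg_cm_strategy u1 s \<and> (\<forall>y0 a1. \<bar>t y0 a1 - s y0 a1\<bar> \<le> \<eta>) \<and>
      (\<alpha>0, \<alpha>2) \<in> rg_B \<rho>0 u0 u2 t \<longrightarrow>
      ereal (rg_u1_stage \<rho>0 u1 \<alpha>0 s \<alpha>2) < rg_vCM \<rho>0 u0 u1 u2 + ereal (\<epsilon> / 4)"
    by (rule compact_bound[OF e4])
  then obtain \<eta> where \<eta>: "0 < \<eta>" and
    \<eta>p: "\<forall>s t \<alpha>0 \<alpha>2. rg_stage1 s \<and> rg_cm_strategy u1 s \<and> (\<forall>y0 a1. \<bar>t y0 a1 - s y0 a1\<bar> \<le> \<eta>) \<and>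
      (\<alpha>0, \<alpha>2) \<in> rg_B \<rho>0 u0 u2 t \<longrightarrow>
      ereal (rg_u1_stage \<rho>0 u1 \<alpha>0 s \<alpha>2) < rg_vCM \<rho>0 u0 u1 u2 + ereal (\<epsilon> / 4)"
    by (elim exE conjE)
  define \<zeta> where "\<zeta> = min \<eta> 1"
  define V where "V = v + \<epsilon> / 4"
  define C where "C = Mu u1 + \<bar>V\<bar>"
  define \<kappa> where "\<kappa> = min (1/2) (\<epsilon> * \<zeta> / (8 * (C + 1)))"
  have z: "0 < \<zeta>" "\<zeta> \<le> 1" "\<zeta> \<le> \<eta>" using \<eta> by (auto simp: \<zeta>_def)
  have C0: "0 \<le> C" unfolding C_def using order.trans[OF abs_ge_zero Mu_bound, of u1] by simp
  have \<kappa>0: "0 < \<kappa>" using eps z C0 by (simp add: \<kappa>_def)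
  have comp: "rg_u1_stage \<rho>0 u1 \<alpha>0 s \<alpha>2 < V"
    if "rg_stage1 s" "rg_cm_strategy u1 s" "\<forall>y a. \<bar>t y a - s y a\<bar> \<le> \<zeta>" "(\<alpha>0, \<alpha>2) \<in> rg_B \<rho>0 u0 u2 t"
    for s t \<alpha>0 \<alpha>2
  proof -
    have "\<forall>y0 a1. \<bar>t y0 a1 - s y0 a1\<bar> \<le> \<eta>" using that(3) z by (meson order.trans)
    then have "ereal (rg_u1_stage \<rho>0 u1 \<alpha>0 s \<alpha>2) < rg_vCM \<rho>0 u0 u1 u2 + ereal (\<epsilon> / 4)"
      using \<eta>p[rule_format, of s t \<alpha>0 \<alpha>2] that by simp
    then show ?thesis by (simp add: v V_def)
  qed
  show "\<exists>\<kappa>>0. \<forall>\<mu>0 \<delta>. rg_prior \<mu>0 \<and> 1 - \<kappa> < \<mu>0 None \<and> 0 < \<delta> \<and> \<delta> < 1 \<longrightarrow>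
           rg_U1bar \<rho>0 \<rho>1 u0 u1 u2 \<mu>0 \<delta> < rg_vCM \<rho>0 u0 u1 u2 + ereal \<epsilon>"
  proof (intro exI[of _ \<kappa>] conjI allI impI)
    show "0 < \<kappa>" by (rule \<kappa>0)
    fix \<mu> :: "('y0 \<Rightarrow> 'a1 \<Rightarrow> real) option \<Rightarrow> real" and \<delta> :: real
    assume H: "rg_prior \<mu> \<and> 1 - \<kappa> < \<mu> None \<and> 0 < \<delta> \<and> \<delta> < 1"
    then have pr: "rg_prior \<mu>" and mk: "1 - \<kappa> < \<mu> None" and d: "0 < \<delta>" "\<delta> < 1" by auto
    define m where "m = \<mu> None"
    define Bnd where "Bnd = V + C * ((1 - m) / (\<zeta> * m))"
    have m1: "m \<le> 1" unfolding m_def by (rule prior_le1[OF pr])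
    have mh: "1/2 \<le> m" using mk by (simp add: m_def \<kappa>_def)
    have each: "rg_U1 \<rho>0 \<rho>1 u1 \<delta> \<sigma>0 \<sigma>1 \<sigma>2 \<le> Bnd" if ne: "rg_NE \<rho>0 \<rho>1 u0 u1 u2 \<mu> \<delta> \<sigma>0 \<sigma>1 \<sigma>2"
      for \<sigma>0 \<sigma>1 \<sigma>2
    proof -
      have v3: "valid3 \<sigma>0 \<sigma>1 \<sigma>2" using ne by (simp add: rg_NE_def valid3_def)
      show ?thesis
      proof (rule R.U1_bound[OF v3 d])
        fix T
        show "rg_exp_stage \<rho>0 \<rho>1 \<sigma>0 \<sigma>1 \<sigma>2 T (R.fu1 u1) \<le> Bnd"
        proof -
          have "rg_exp_stage \<rho>0 \<rho>1 \<sigma>0 \<sigma>1 \<sigma>2 T (R.fu1 u1) \<le> V + (Mu u1 + \<bar>V\<bar>) * ((1 - \<mu> None) / (\<zeta> * \<mu> None))"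
            by (rule R.period_bound[OF pr ne d full sep _ z(1,2)]) (rule comp)
          then show ?thesis by (simp add: Bnd_def C_def m_def)
        qed
      qed
    qed
    have small: "C * ((1 - m) / (\<zeta> * m)) \<le> \<epsilon> / 4"
    proof -
      have a: "1 - m \<le> \<kappa>" using mk by (simp add: m_def)
      have "C * (1 - m) \<le> (C + 1) * \<kappa>"
      proof -
        have "C * (1 - m) \<le> C * \<kappa>" using a C0 by (rule mult_left_mono)
        also have "\<dots> \<le> (C + 1) * \<kappa>" using \<kappa>0 by simp
        finally show ?thesis .
      qed
      also have "\<dots> \<le> (C + 1) * (\<epsilon> * \<zeta> / (8 * (C + 1)))"
        using C0 by (intro mult_left_mono) (auto simp: \<kappa>_def)
      also have "\<dots> = \<epsilon> * \<zeta> / 8" using C0 by (simp add: field_simps)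
      also have "\<dots> \<le> \<epsilon> / 4 * (\<zeta> * m)"
      proof -
        have "\<epsilon> * \<zeta> * (1/2) \<le> \<epsilon> * \<zeta> * m" using mh eps z by (intro mult_left_mono) auto
        then show ?thesis by (simp add: algebra_simps)
      qed
      finally have "C * (1 - m) \<le> \<epsilon> / 4 * (\<zeta> * m)" .
      moreover have "0 < \<zeta> * m" using z mh by simp
      ultimately have "C * (1 - m) / (\<zeta> * m) \<le> \<epsilon> / 4" by (simp add: pos_divide_le_eq)
      then show ?thesis by simp
    qed
    have "rg_U1bar \<rho>0 \<rho>1 u0 u1 u2 \<mu> \<delta> \<le> ereal Bnd"
      unfolding rg_U1bar_def by (rule Sup_least) (auto intro: each)
    also have "ereal Bnd < ereal (v + \<epsilon>)"
    proof -
      have "Bnd \<le> v + \<epsilon> / 4 + \<epsilon> / 4" unfolding Bnd_def V_def using small by linarith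
      then show ?thesis using eps by simp
    qed
    finally show "rg_U1bar \<rho>0 \<rho>1 u0 u1 u2 \<mu> \<delta> < rg_vCM \<rho>0 u0 u1 u2 + ereal \<epsilon>"
      by (simp add: v)
  qed
qed

end
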